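(* Let $M\subset\bigoplus_{i=1}^rA[-\delta_i]$ be a graded right $A$-submodule and $M'=L(M)$. For every $d\ge0$, $\iota(M_d)=M'(d)_d$, where $M'(d)=M'\cap\bigoplus_iS(\delta_i,d)[-\delta_i]$ (the set of elements $\sum_ie'_ih_i$ of $M'$ with $h_i\in S(\delta_i,d)$). In particular $\dim_{\mathbb K}M_d=\dim_{\mathbb K}M'(d)_d$.
   Context: Let $\mathbb K$ be a field, $F=\mathbb K\langle x_1,\dots,x_n\rangle$ with standard grading, $I\subset F$ a graded two-sided ideal, $A=F/I$, $A[-\delta]_d=A_{d-\delta}$, $\bigoplus_{i=1}^rA[-\delta_i]$ the graded free right $A$-module with basis $e_i$ of degree $\delta_i$. Let $P=\mathbb K[x_{ij}\mid1\le i\le n,j\ge1]$ (commutative, $\deg x_{ij}=1$), $Q$ the ideal generated by all $x_{ij}x_{kj}$, $R=P/Q$, $\sigma:x_{ij}\mapsto x_{i,j+1}$, $\iota:F\to R$ the $\mathbb K$-linear map $x_{i_1}\cdots x_{i_d}\mapsto x_{i_11}\cdots x_{i_dd}$, $J$ the ideal of $R$ generated by $\bigcup_{k\ge0}\sigma^k(\iota(I))$, $S=R/J$ (with induced $\sigma$ and induced injective graded linear $\iota:A\to S$). For integers $0\le\delta\le d$, $S(\delta,d)$ is the subalgebra of $S$ generated by the cosets of $x_{ij}$ with $1\le i\le n$, $\delta<j\le d$. $\bigoplus_iS[-\delta_i]$ is the graded free $S$-module with basis $e'_i$ of degree $\delta_i$, and $\iota:\bigoplus_iA[-\delta_i]\to\bigoplus_iS[-\delta_i]$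 is the $\mathbb K$-linear map $e_if\mapsto e'_i\sigma^{\delta_i}(\iota(f))$. For a graded right submodule $M$, its letterplace analogue $L(M)$ is the $S$-submodule of $\bigoplus_iS[-\delta_i]$ generated by $\iota(M)$. *)

theory Defs
  imports Complex_Main "HOL-Library.Poly_Mapping" "HOL-Library.Function_Algebras"
begin

text \<open>Letters x_1..x_n are the elements of a finite type 'a (n = CARD('a)).
 Noncommutative polynomials F = K<x_1..x_n>: finitely supported maps from words to K.\<close>
type_synonym ('a,'k) ncpoly = "'a list \<Rightarrow>\<^sub>0 'k"

text \<open>Commutative polynomials P = K[x_ij]: finitely supported maps from monomials
 (finitely supported exponent maps on variables (i,j)) to K.
 Column indices are 0-based: the pair (i,j) stands for the paper's variable x_{i,j+1}.\<close>
type_synonym ('a,'k) lppoly = "(('a \<times> nat) \<Rightarrow>\<^sub>0 nat) \<Rightarrow>\<^sub>0 'k"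

definition ncmul :: "('a,'k::field) ncpoly \<Rightarrow> ('a,'k) ncpoly \<Rightarrow> ('a,'k) ncpoly" where
  "ncmul f g = (\<Sum>u\<in>Poly_Mapping.keys f. \<Sum>v\<in>Poly_Mapping.keys g. Poly_Mapping.single (u @ v) (Poly_Mapping.lookup f u * Poly_Mapping.lookup g v))"

definition nc_scale :: "'k::field \<Rightarrow> ('b \<Rightarrow> ('a,'k) ncpoly) \<Rightarrow> ('b \<Rightarrow> ('a,'k) ncpoly)" where
  "nc_scale c m = (\<lambda>i. Poly_Mapping.map ((*) c) (m i))"

text \<open>f is homogeneous of degree e (e an integer; negative e forces f = 0).\<close>
definition nc_homog :: "int \<Rightarrow> ('a,'k::field) ncpoly \<Rightarrow> bool" where
  "nc_homog e f \<longleftrightarrow> (\<forall>w\<in>Poly_Mapping.keys f. int (length w) = e)"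

definition nc_part :: "nat \<Rightarrow> ('a,'k::field) ncpoly \<Rightarrow> ('a,'k) ncpoly" where
  "nc_part d f = (\<Sum>w\<in>{w\<in>Poly_Mapping.keys f. length w = d}. Poly_Mapping.single w (Poly_Mapping.lookup f w))"

definition graded_two_sided_ideal :: "('a,'k::field) ncpoly set \<Rightarrow> bool" where
  "graded_two_sided_ideal I \<longleftrightarrow>
     0 \<in> I \<and> (\<forall>f\<in>I. \<forall>g\<in>I. f + g \<in> I) \<and>
     (\<forall>f\<in>I. \<forall>g. ncmul g f \<in> I \<and> ncmul f g \<in> I) \<and>
     (\<forall>f\<in>I. \<forall>d. nc_part d f \<in> I)"

text \<open>Elements of the free module over F with basis e_i (i :: 'b, deg e_i = \<delta> i) are tuples
 m :: 'b \<Rightarrow> F standing for \<Sum>_i e_i m_i.\<close>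
definition mod_homog :: "('b \<Rightarrow> nat) \<Rightarrow> nat \<Rightarrow> ('b \<Rightarrow> ('a,'k::field) ncpoly) \<Rightarrow> bool" where
  "mod_homog \<delta> d m \<longleftrightarrow> (\<forall>i. nc_homog (int d - int (\<delta> i)) (m i))"

definition mod_part :: "('b \<Rightarrow> nat) \<Rightarrow> nat \<Rightarrow> ('b \<Rightarrow> ('a,'k::field) ncpoly) \<Rightarrow> ('b \<Rightarrow> ('a,'k) ncpoly)" where
  "mod_part \<delta> d m = (\<lambda>i. if \<delta> i \<le> d then nc_part (d - \<delta> i) (m i) else 0)"

text \<open>A graded right A-submodule M of \<Oplus>_i A[-\<delta>_i] (A = F/I) is represented by its full
 preimage M~ in \<Oplus>_i F[-\<delta>_i]: a graded right F-submodule containing \<Oplus>_i I.\<close>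
definition graded_right_submodule_pre ::
  "('a,'k::field) ncpoly set \<Rightarrow> ('b \<Rightarrow> nat) \<Rightarrow> ('b \<Rightarrow> ('a,'k) ncpoly) set \<Rightarrow> bool" where
  "graded_right_submodule_pre I \<delta> M \<longleftrightarrow>
     (\<forall>m. (\<forall>i. m i \<in> I) \<longrightarrow> m \<in> M) \<and>
     (\<forall>m\<in>M. \<forall>m'\<in>M. (\<lambda>i. m i + m' i) \<in> M) \<and>
     (\<forall>m\<in>M. \<forall>g. (\<lambda>i. ncmul (m i) g) \<in> M) \<and>
     (\<forall>m\<in>M. \<forall>d. mod_part \<delta> d m \<in> M)"

definition lp_var :: "'a \<Rightarrow> nat \<Rightarrow> ('a,'k::field) lppoly" where
  "lp_var i j = Poly_Mapping.single (Poly_Mapping.single (i,j) 1) 1"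

text \<open>\<iota>: x_{i_1}...x_{i_d} \<mapsto> x_{i_1,1}...x_{i_d,d} (0-based columns 0..d-1 here).\<close>
definition lp_iota :: "('a,'k::field) ncpoly \<Rightarrow> ('a,'k) lppoly" where
  "lp_iota f = (\<Sum>w\<in>Poly_Mapping.keys f.
      Poly_Mapping.single (\<Sum>k<length w. Poly_Mapping.single (w!k, k) 1) (Poly_Mapping.lookup f w))"

definition lp_shift_mon :: "(('a \<times> nat) \<Rightarrow>\<^sub>0 nat) \<Rightarrow> (('a \<times> nat) \<Rightarrow>\<^sub>0 nat)" where
  "lp_shift_mon m = (\<Sum>ij\<in>Poly_Mapping.keys m. Poly_Mapping.single (fst ij, Suc (snd ij)) (Poly_Mapping.lookup m ij))"

definition lp_sigma :: "('a,'k::field) lppoly \<Rightarrow> ('a,'k) lppoly" where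
  "lp_sigma p = (\<Sum>m\<in>Poly_Mapping.keys p. Poly_Mapping.single (lp_shift_mon m) (Poly_Mapping.lookup p m))"

definition ideal_gen :: "('a,'k::field) lppoly set \<Rightarrow> ('a,'k) lppoly set" where
  "ideal_gen G = module.span (*) G"

text \<open>Kernel of P \<rightarrow> S = R/J = P/(Q + ideal generated by lifts of \<sigma>^k(\<iota>(I))).\<close>
definition lp_Kideal :: "('a,'k::field) ncpoly set \<Rightarrow> ('a,'k) lppoly set" where
  "lp_Kideal I = ideal_gen ({lp_var i j * lp_var k j | i k j. True} \<union>
                            (\<Union>k. (lp_sigma ^^ k) ` lp_iota ` I))"

definition mdeg :: "(('a \<times> nat) \<Rightarrow>\<^sub>0 nat) \<Rightarrow> nat" where
  "mdeg m = (\<Sum>v\<in>Poly_Mapping.keys m. Poly_Mapping.lookup m v)"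

definition lp_homog :: "int \<Rightarrow> ('a,'k::field) lppoly \<Rightarrow> bool" where
  "lp_homog e p \<longleftrightarrow> (\<forall>m\<in>Poly_Mapping.keys p. int (mdeg m) = e)"

text \<open>p is a polynomial in the variables x_{i,j} with \<delta> < j \<le> d (paper indexing),
 i.e. 0-based columns \<delta> \<le> j < d.\<close>
definition lp_in_vars :: "nat \<Rightarrow> nat \<Rightarrow> ('a,'k::field) lppoly \<Rightarrow> bool" where
  "lp_in_vars \<delta> d p \<longleftrightarrow> (\<forall>m\<in>Poly_Mapping.keys p. \<forall>ij\<in>Poly_Mapping.keys m. \<delta> \<le> snd ij \<and> snd ij < d)"

definition lp_scale :: "'k::field \<Rightarrow> ('b \<Rightarrow> ('a,'k) lppoly) \<Rightarrow> ('b \<Rightarrow> ('a,'k) lppoly)" where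
  "lp_scale c h = (\<lambda>i. Poly_Mapping.map ((*) c) (h i))"

definition lp_iota_mod :: "('b \<Rightarrow> nat) \<Rightarrow> ('b \<Rightarrow> ('a,'k::field) ncpoly) \<Rightarrow> ('b \<Rightarrow> ('a,'k) lppoly)" where
  "lp_iota_mod \<delta> m = (\<lambda>i. (lp_sigma ^^ \<delta> i) (lp_iota (m i)))"

text \<open>Preimage in \<Oplus>_i P of \<iota>(M_d) \<subseteq> \<Oplus>_i S[-\<delta>_i].\<close>
definition iota_Md_pre ::
  "('a,'k::field) ncpoly set \<Rightarrow> ('b \<Rightarrow> nat) \<Rightarrow> ('b \<Rightarrow> ('a,'k) ncpoly) set \<Rightarrow> nat \<Rightarrow> ('b \<Rightarrow> ('a,'k) lppoly) set" where
  "iota_Md_pre I \<delta> M d =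
     {h. \<exists>m\<in>M. mod_homog \<delta> d m \<and> (\<forall>i. h i - lp_iota_mod \<delta> m i \<in> lp_Kideal I)}"

text \<open>Preimage in \<Oplus>_i P of M' = L(M), the S-submodule generated by \<iota>(M).\<close>
definition L_pre ::
  "('a,'k::field) ncpoly set \<Rightarrow> ('b \<Rightarrow> nat) \<Rightarrow> ('b \<Rightarrow> ('a,'k) ncpoly) set \<Rightarrow> ('b \<Rightarrow> ('a,'k) lppoly) set" where
  "L_pre I \<delta> M =
     {h. \<exists>g\<in>module.span (\<lambda>p v. (\<lambda>i. p * v i)) (lp_iota_mod \<delta> ` M).
           \<forall>i. h i - g i \<in> lp_Kideal I}"

text \<open>Preimage of M'(d)_d: elements of M' whose components h_i lie in S(\<delta>_i,d) and which are
 homogeneous of degree d, i.e. h_i \<in> S_{d-\<delta>_i} (h_i = 0 if d < \<delta>_i).\<close>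
definition Lcut_pre ::
  "('a,'k::field) ncpoly set \<Rightarrow> ('b \<Rightarrow> nat) \<Rightarrow> ('b \<Rightarrow> ('a,'k) ncpoly) set \<Rightarrow> nat \<Rightarrow> ('b \<Rightarrow> ('a,'k) lppoly) set" where
  "Lcut_pre I \<delta> M d =
     {h \<in> L_pre I \<delta> M. \<forall>i.
        (\<exists>p. lp_in_vars (\<delta> i) d p \<and> h i - p \<in> lp_Kideal I) \<and>
        (\<exists>q. lp_homog (int d - int (\<delta> i)) q \<and> h i - q \<in> lp_Kideal I)}"

text \<open>K-dimension of (V + W)/W, via maximal size of subsets of V linearly independent modulo W.\<close>
definition indep_mod :: "('k::field \<Rightarrow> 'v \<Rightarrow> 'v) \<Rightarrow> 'v::ab_group_add set \<Rightarrow> 'v set \<Rightarrow> bool" where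
  "indep_mod sc W B \<longleftrightarrow> finite B \<and> (\<forall>c. (\<Sum>b\<in>B. sc (c b) b) \<in> W \<longrightarrow> (\<forall>b\<in>B. c b = 0))"

definition dim_mod :: "('k::field \<Rightarrow> 'v \<Rightarrow> 'v) \<Rightarrow> 'v::ab_group_add set \<Rightarrow> 'v set \<Rightarrow> nat" where
  "dim_mod sc V W = Sup {card B | B. B \<subseteq> V \<and> indep_mod sc W B}"

end

theory Submission
  imports Defs
begin


lemma sum_fun_apply: "(\<Sum>a\<in>A. f a) x = (\<Sum>a\<in>A. f a x)"
  by (induction A rule: infinite_finite_induct) auto

lemma lookup_map': "Poly_Mapping.lookup (Poly_Mapping.map g p) k = (if Poly_Mapping.lookup p k = 0 then 0 else g (Poly_Mapping.lookup p k))"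
  by (simp add: Poly_Mapping.map.rep_eq when_def)

definition lin :: "('i \<Rightarrow> 'c::zero \<Rightarrow> 'v::comm_monoid_add) \<Rightarrow> ('i \<Rightarrow>\<^sub>0 'c) \<Rightarrow> 'v" where
  "lin \<phi> f = (\<Sum>i\<in>Poly_Mapping.keys f. \<phi> i (Poly_Mapping.lookup f i))"

lemma lin_superset:
  assumes "finite S" "Poly_Mapping.keys f \<subseteq> S" "\<And>i. \<phi> i 0 = 0"
  shows "lin \<phi> f = (\<Sum>i\<in>S. \<phi> i (Poly_Mapping.lookup f i))"
  unfolding lin_def
  by (rule sum.mono_neutral_left) (use assms in \<open>auto simp: in_keys_iff\<close>)

lemma lin_add:
  assumes "\<And>i. \<phi> i 0 = 0" "\<And>i a b. \<phi> i (a + b) = \<phi> i a + \<phi> i b"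
  shows "lin \<phi> (f + g) = lin \<phi> f + lin \<phi> g"
proof -
  let ?S = "Poly_Mapping.keys f \<union> Poly_Mapping.keys g"
  have "lin \<phi> (f + g) = (\<Sum>i\<in>?S. \<phi> i (Poly_Mapping.lookup (f+g) i))"
    by (rule lin_superset) (use assms keys_add[of f g] in auto)
  also have "\<dots> = (\<Sum>i\<in>?S. \<phi> i (Poly_Mapping.lookup f i)) + (\<Sum>i\<in>?S. \<phi> i (Poly_Mapping.lookup g i))"
    by (simp add: lookup_add assms sum.distrib)
  also have "\<dots> = lin \<phi> f + lin \<phi> g"
    by (subst (1 2) lin_superset[where S="?S"]) (use assms in auto)
  finally show ?thesis .
qed

lemma lin_zero [simp]: "lin \<phi> 0 = 0"
  by (simp add: lin_def)

lemma lin_single: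
  assumes "\<phi> i 0 = 0"
  shows "lin \<phi> (Poly_Mapping.single i c) = \<phi> i c"
  using assms by (cases "c = 0") (auto simp: lin_def)

lemma lin_sum:
  assumes "\<And>i. \<phi> i 0 = 0" "\<And>i a b. \<phi> i (a + b) = \<phi> i a + \<phi> i b"
  shows "lin \<phi> (\<Sum>x\<in>A. f x) = (\<Sum>x\<in>A. lin \<phi> (f x))"
  by (induction A rule: infinite_finite_induct) (auto simp: lin_add[OF assms])

lemma lin_minus:
  fixes \<phi> :: "'i \<Rightarrow> 'c::ab_group_add \<Rightarrow> 'v::ab_group_add"
  assumes "\<And>i. \<phi> i 0 = 0" "\<And>i a b. \<phi> i (a + b) = \<phi> i a + \<phi> i b"
  shows "lin \<phi> (f - g) = lin \<phi> f - lin \<phi> g"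
  using lin_add[of \<phi> "f - g" g, OF assms] by (simp add: algebra_simps)

lemma lin_expand: "lin Poly_Mapping.single f = f"
  by (rule poly_mapping_eqI) (auto simp: lin_def lookup_sum lookup_single when_def in_keys_iff)

lemma lin_hom:
  assumes "H 0 = 0" "\<And>a b. H (a + b) = H a + H b"
  shows "H (lin \<phi> f) = lin (\<lambda>i c. H (\<phi> i c)) f"
  unfolding lin_def using sum_comp_morphism[of H, OF assms] by (metis (no_types, lifting) comp_apply sum.cong)

lemma lin_cong:
  assumes "\<And>i. i \<in> Poly_Mapping.keys f \<Longrightarrow> \<phi> i (Poly_Mapping.lookup f i) = \<psi> i (Poly_Mapping.lookup f i)"
  shows "lin \<phi> f = lin \<psi> f"
  unfolding lin_def using assms by (rule sum.cong[OF refl])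

lemma lin_scale:
  assumes "\<And>i. \<phi> i 0 = 0"
  shows "lin \<phi> (Poly_Mapping.map ((*) a) f) = lin (\<lambda>i x. \<phi> i (a * x)) f"
proof -
  have k: "Poly_Mapping.keys (Poly_Mapping.map ((*) a) f) \<subseteq> Poly_Mapping.keys f"
    by (auto simp: in_keys_iff lookup_map')
  show ?thesis
    by (subst lin_superset[OF finite_keys k]) (auto simp: assms lin_def lookup_map' intro!: sum.cong)
qed

lemma lin_keys:
  assumes "\<And>i c. Poly_Mapping.keys (\<phi> i c) \<subseteq> X i"
  shows "Poly_Mapping.keys (lin \<phi> f) \<subseteq> (\<Union>i\<in>Poly_Mapping.keys f. X i)"
  unfolding lin_def using keys_sum assms by fastforce


definition wm :: "nat \<Rightarrow> 'a list \<Rightarrow> ('a \<times> nat) \<Rightarrow>\<^sub>0 nat" where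
  "wm \<delta> w = (\<Sum>k<length w. Poly_Mapping.single (w!k, \<delta>+k) 1)"

lemma lookup_wm:
  "Poly_Mapping.lookup (wm \<delta> w) (x,j) = (if \<delta> \<le> j \<and> j < \<delta>+length w \<and> w!(j-\<delta>) = x then 1 else 0)"
proof -
  have eq: "(1 when (w!k, \<delta>+k) = (x,j)) = (if k = j - \<delta> then (if \<delta> \<le> j \<and> w!(j-\<delta>) = x then 1 else 0) else (0::nat))" for k
  proof -
    have "((w!k, \<delta>+k) = (x,j)) \<longleftrightarrow> (k = j - \<delta> \<and> \<delta> \<le> j \<and> w!(j-\<delta>) = x)"
    proof
      assume "(w!k, \<delta>+k) = (x,j)"
      then have "j = \<delta>+k" "x = w!k" by auto
      then show "k = j - \<delta> \<and> \<delta> \<le> j \<and> w!(j-\<delta>) = x" by simp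
    next
      assume H: "k = j - \<delta> \<and> \<delta> \<le> j \<and> w!(j-\<delta>) = x"
      then have "j = \<delta> + k" by simp
      then show "(w!k, \<delta>+k) = (x,j)" using H by simp
    qed
    then show ?thesis by (simp add: when_def)
  qed
  have "Poly_Mapping.lookup (wm \<delta> w) (x,j) = (\<Sum>k<length w. if k = j - \<delta> then (if \<delta> \<le> j \<and> w!(j-\<delta>) = x then 1 else 0) else 0)"
    by (simp only: wm_def lookup_sum lookup_single eq)
  also have "\<dots> = (if \<delta> \<le> j \<and> j < \<delta>+length w \<and> w!(j-\<delta>) = x then 1 else 0)"
    apply (subst sum.delta)
     apply simp
    apply (cases "\<delta> \<le> j")
     apply (simp add: less_diff_conv2 add.commute)
    apply simp
    done
  finally show ?thesis .
qed

lemma if10: "((if C then (1::nat) else 0) = 1) = C" "((if C then (1::nat) else 0) \<noteq> 0) = C"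
   "((if C then (1::nat) else 0) \<ge> 1) = C"
  by auto

lemma lookup_wm': "Poly_Mapping.lookup (wm \<delta> w) p = (if \<delta> \<le> snd p \<and> snd p < \<delta>+length w \<and> w!(snd p-\<delta>) = fst p then 1 else 0)"
  using lookup_wm[of \<delta> w "fst p" "snd p"] by simp

lemma wm_Nil [simp]: "wm \<delta> [] = 0"
  by (simp add: wm_def)

lemma wm_append: "wm \<delta> (a @ b) = wm \<delta> a + wm (\<delta> + length a) b"
  by (rule poly_mapping_eqI) (auto simp: lookup_add lookup_wm' nth_append)

lemma keys_wm: "Poly_Mapping.keys (wm \<delta> w) = {(w!k, \<delta>+k) | k. k < length w}"
  by (auto simp: in_keys_iff lookup_wm' split: if_splits)

lemma mdeg_lin: "mdeg m = lin (\<lambda>v n. n) m"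
  by (simp add: mdeg_def lin_def)

lemma mdeg_add: "mdeg (a + b) = mdeg a + mdeg b"
  unfolding mdeg_lin by (rule lin_add) auto

lemma mdeg_single [simp]: "mdeg (Poly_Mapping.single v n) = n"
  unfolding mdeg_lin by (rule lin_single) auto

lemma mdeg_zero [simp]: "mdeg 0 = 0"
  by (simp add: mdeg_def)

lemma mdeg_sum: "mdeg (\<Sum>x\<in>A. f x) = (\<Sum>x\<in>A. mdeg (f x))"
  unfolding mdeg_lin by (rule lin_sum) auto

lemma mdeg_wm [simp]: "mdeg (wm \<delta> w) = length w"
  by (simp add: wm_def mdeg_sum)

lemma shift_lin: "lp_shift_mon m = lin (\<lambda>ij n. Poly_Mapping.single (fst ij, Suc (snd ij)) n) m"
  by (simp add: lp_shift_mon_def lin_def)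

lemma shift_add: "lp_shift_mon (a + b) = lp_shift_mon a + lp_shift_mon b"
  unfolding shift_lin by (rule lin_add) (auto simp: single_add)

lemma shift_zero [simp]: "lp_shift_mon 0 = 0"
  by (simp add: shift_lin)

lemma shift_single [simp]: "lp_shift_mon (Poly_Mapping.single (x,j) n) = Poly_Mapping.single (x, Suc j) n"
  unfolding shift_lin by (subst lin_single) auto

lemma shift_sum: "lp_shift_mon (\<Sum>x\<in>A. f x) = (\<Sum>x\<in>A. lp_shift_mon (f x))"
  unfolding shift_lin by (rule lin_sum) (auto simp: single_add)

lemma shift_wm [simp]: "lp_shift_mon (wm \<delta> w) = wm (Suc \<delta>) w"
  by (simp add: wm_def shift_sum)

lemma wm_inj: assumes "wm \<delta> a = wm \<delta> b" shows "a = b"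
proof -
  have len: "length a = length b" using arg_cong[OF assms, of mdeg] by simp
  show ?thesis
  proof (rule nth_equalityI[OF len])
    fix k assume k: "k < length a"
    have "Poly_Mapping.lookup (wm \<delta> b) (a!k, \<delta>+k) = 1"
      using k by (simp add: assms[symmetric] lookup_wm)
    then show "a!k = b!k" by (simp add: lookup_wm split: if_splits)
  qed
qed

lemma wm_inj2: assumes "wm D b = wm D' b'" "b \<noteq> []" shows "D = D' \<and> b = b'"
proof -
  have len: "length b = length b'" using arg_cong[OF assms(1), of mdeg] by simp
  have 1: "Poly_Mapping.lookup (wm D' b') (b!0, D) = 1"
    using assms(2) by (simp add: assms(1)[symmetric] lookup_wm)
  have 2: "Poly_Mapping.lookup (wm D b) (b'!0, D') = 1"
    using assms(2) len by (cases b') (simp_all add: assms(1) lookup_wm)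
  have "D' \<le> D" using 1 by (simp only: lookup_wm if10) 
  moreover have "D \<le> D'" using 2 by (simp only: lookup_wm if10) 
  ultimately have "D = D'" by simp
  then show ?thesis using wm_inj assms by metis
qed

lemma wm_split:
  assumes eq: "m + wm k w = wm \<delta> v" and ne: "w \<noteq> []"
  shows "\<delta> \<le> k \<and> k + length w \<le> \<delta> + length v \<and> v = take (k-\<delta>) v @ w @ drop (k-\<delta>+length w) v
         \<and> m = wm \<delta> (take (k-\<delta>) v) + wm (k + length w) (drop (k-\<delta>+length w) v)"
proof -
  have pos: "\<delta> \<le> k+t \<and> k+t < \<delta> + length v \<and> v!(k+t-\<delta>) = w!t" if t: "t < length w" for t
  proof -
    have "Poly_Mapping.lookup (wm k w) (w!t, k+t) = 1" using t by (simp add: lookup_wm)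
    then have "Poly_Mapping.lookup (wm \<delta> v) (w!t, k+t) \<ge> 1"
      by (simp add: eq[symmetric] lookup_add)
    then show ?thesis by (simp add: lookup_wm split: if_splits)
  qed
  from pos[of 0] ne have a: "\<delta> \<le> k" by auto
  from pos[of "length w - 1"] ne have b: "k + length w \<le> \<delta> + length v" by auto
  define A where "A = take (k-\<delta>) v"
  define B where "B = drop (k-\<delta>+length w) v"
  have mid: "take (length w) (drop (k-\<delta>) v) = w"
    by (rule nth_equalityI) (use a b pos in \<open>auto simp: add.commute\<close>)
  have v: "v = A @ w @ B"
  proof -
    have "v = take (k-\<delta>) v @ take (length w) (drop (k-\<delta>) v) @ drop (length w) (drop (k-\<delta>) v)"
      by (metis append_take_drop_id)
    then show ?thesis unfolding mid A_def B_def by (simp add: add.commute)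
  qed
  have lA: "length A = k - \<delta>" using a b by (simp add: A_def)
  have "wm \<delta> v = wm \<delta> A + wm k w + wm (k + length w) B"
    using v a lA by (simp add: wm_append add.assoc)
  then have "m + wm k w = (wm \<delta> A + wm (k + length w) B) + wm k w"
    using eq by (simp add: ac_simps)
  then have mm: "m = wm \<delta> A + wm (k + length w) B" by simp
  show ?thesis unfolding A_def[symmetric] B_def[symmetric] using a b v mm by (intro conjI) assumption+
qed


lemma lin_plus_fun: "lin (\<lambda>i c. \<phi> i c + \<psi> i c) f = lin \<phi> f + lin \<psi> f"
  by (simp add: lin_def sum.distrib)

lemma lin_zero_fun [simp]: "lin (\<lambda>i c. 0) f = 0"
  by (simp add: lin_def)

lemma lookup_map_mult: "Poly_Mapping.lookup (Poly_Mapping.map ((*) (a::'c::semiring_0)) p) k = a * Poly_Mapping.lookup p k"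
  by (simp add: lookup_map')

lemma map_mult_add: "Poly_Mapping.map ((*) (a::'c::semiring_0)) (p + q) = Poly_Mapping.map ((*) a) p + Poly_Mapping.map ((*) a) q"
  by (rule poly_mapping_eqI) (simp add: lookup_map_mult lookup_add distrib_left)

lemma map_mult_zero [simp]: "Poly_Mapping.map ((*) (a::'c::semiring_0)) 0 = 0"
  by (rule poly_mapping_eqI) (simp add: lookup_map_mult)

definition io :: "nat \<Rightarrow> ('a,'k::field) ncpoly \<Rightarrow> ('a,'k) lppoly" where
  "io k f = lin (\<lambda>w c. Poly_Mapping.single (wm k w) c) f"

lemma io_add: "io k (f + g) = io k f + io k g"
  unfolding io_def by (rule lin_add) (auto simp: single_add)

lemma io_zero [simp]: "io k 0 = 0"
  by (simp add: io_def)

lemma io_minus: "io k (f - g) = io k f - io k g"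
  unfolding io_def by (rule lin_minus) (auto simp: single_add)

lemma io_sum: "io k (\<Sum>x\<in>A. f x) = (\<Sum>x\<in>A. io k (f x))"
  unfolding io_def by (rule lin_sum) (auto simp: single_add)

lemma io_single [simp]: "io k (Poly_Mapping.single w c) = Poly_Mapping.single (wm k w) c"
  unfolding io_def by (rule lin_single) auto

lemma lp_iota_io: "lp_iota f = io 0 f"
  by (simp add: lp_iota_def io_def lin_def wm_def)

lemma sigma_lin: "lp_sigma p = lin (\<lambda>m c. Poly_Mapping.single (lp_shift_mon m) c) p"
  by (simp add: lp_sigma_def lin_def)

lemma sigma_add: "lp_sigma (p + q) = lp_sigma p + lp_sigma q"
  unfolding sigma_lin by (rule lin_add) (auto simp: single_add)

lemma sigma_zero [simp]: "lp_sigma 0 = 0"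
  by (simp add: sigma_lin)

lemma sigma_single [simp]: "lp_sigma (Poly_Mapping.single m c) = Poly_Mapping.single (lp_shift_mon m) c"
  unfolding sigma_lin by (rule lin_single) auto

lemma sigma_io: "lp_sigma (io k f) = io (Suc k) f"
  unfolding io_def by (subst lin_hom[where H=lp_sigma]) (auto simp: sigma_add)

lemma sigma_pow_io: "(lp_sigma ^^ k) (lp_iota f) = io k f"
  by (induction k) (auto simp: lp_iota_io sigma_io)

lemma io_scale: "io k (Poly_Mapping.map ((*) a) f) = Poly_Mapping.map ((*) a) (io k f)"
proof -
  have "io k (Poly_Mapping.map ((*) a) f) = lin (\<lambda>w x. Poly_Mapping.single (wm k w) (a*x)) f"
    unfolding io_def by (rule lin_scale) auto
  also have "\<dots> = Poly_Mapping.map ((*) a) (io k f)"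
    unfolding io_def by (subst lin_hom[where H="Poly_Mapping.map ((*) a)"]) (auto simp: map_mult_add)
  finally show ?thesis .
qed

lemma keys_io: "Poly_Mapping.keys (io k f) \<subseteq> wm k ` Poly_Mapping.keys f"
proof -
  have "Poly_Mapping.keys (io k f) \<subseteq> (\<Union>i\<in>Poly_Mapping.keys f. {wm k i})"
    unfolding io_def by (rule lin_keys) auto
  then show ?thesis by auto
qed

definition rho :: "nat \<Rightarrow> ('a,'k::field) lppoly \<Rightarrow> ('a,'k) ncpoly" where
  "rho \<delta> p = lin (\<lambda>m c. if \<exists>w. m = wm \<delta> w then Poly_Mapping.single (THE w. m = wm \<delta> w) c else 0) p"

lemma rho_add: "rho \<delta> (p + q) = rho \<delta> p + rho \<delta> q"
  unfolding rho_def by (rule lin_add) (auto simp: single_add)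

lemma rho_zero [simp]: "rho \<delta> 0 = 0"
  by (simp add: rho_def)

lemma rho_minus: "rho \<delta> (p - q) = rho \<delta> p - rho \<delta> q"
  unfolding rho_def by (rule lin_minus) (auto simp: single_add)

lemma rho_sum: "rho \<delta> (\<Sum>x\<in>A. f x) = (\<Sum>x\<in>A. rho \<delta> (f x))"
  unfolding rho_def by (rule lin_sum) (auto simp: single_add)

lemma rho_single: "rho \<delta> (Poly_Mapping.single m c) =
   (if \<exists>w. m = wm \<delta> w then Poly_Mapping.single (THE w. m = wm \<delta> w) c else 0)"
  unfolding rho_def by (rule lin_single) auto

lemma rho_single_wm [simp]: "rho \<delta> (Poly_Mapping.single (wm \<delta> w) c) = Poly_Mapping.single w c"
proof -
  have "(THE v. wm \<delta> w = wm \<delta> v) = w"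
    by (rule the_equality) (auto dest: wm_inj)
  then show ?thesis by (auto simp: rho_single)
qed

lemma rho_single_not: "\<not> (\<exists>w. m = wm \<delta> w) \<Longrightarrow> rho \<delta> (Poly_Mapping.single m c) = 0"
  by (simp add: rho_single)

lemma rho_io [simp]: "rho \<delta> (io \<delta> f) = f"
  unfolding io_def by (subst lin_hom[where H="rho \<delta>"]) (auto simp: rho_add lin_expand)

lemma rho_scale: "rho \<delta> (Poly_Mapping.map ((*) a) p) = Poly_Mapping.map ((*) a) (rho \<delta> p)"
proof -
  have "rho \<delta> (Poly_Mapping.map ((*) a) p) =
     lin (\<lambda>m c. if \<exists>w. m = wm \<delta> w then Poly_Mapping.single (THE w. m = wm \<delta> w) (a*c) else 0) p"
    unfolding rho_def by (subst lin_scale) auto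
  also have "\<dots> = Poly_Mapping.map ((*) a) (rho \<delta> p)"
    unfolding rho_def by (subst lin_hom[where H="Poly_Mapping.map ((*) a)"]) (auto simp: map_mult_add intro!: lin_cong)
  finally show ?thesis .
qed

lemma keys_rho: "Poly_Mapping.keys (rho \<delta> p) \<subseteq> {w. wm \<delta> w \<in> Poly_Mapping.keys p}"
proof -
  have "Poly_Mapping.keys (rho \<delta> p) \<subseteq> (\<Union>m\<in>Poly_Mapping.keys p. {w. wm \<delta> w = m})"
    unfolding rho_def
  proof (rule lin_keys)
    fix m and c :: 'b
    show "Poly_Mapping.keys (if \<exists>w. m = wm \<delta> w then Poly_Mapping.single (THE w. m = wm \<delta> w) c else 0) \<subseteq> {w. wm \<delta> w = m}"
    proof (cases "\<exists>w. m = wm \<delta> w")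
      case True
      then obtain w where "m = wm \<delta> w" by auto
      moreover have "(THE v. wm \<delta> w = wm \<delta> v) = w"
        by (rule the_equality) (auto dest: wm_inj)
      ultimately show ?thesis by auto
    qed auto
  qed
  then show ?thesis by auto
qed

lemma ncmul_lin: "ncmul f g = lin (\<lambda>u a. lin (\<lambda>v b. Poly_Mapping.single (u@v) (a*b)) g) f"
  by (simp add: ncmul_def lin_def)

lemma ncmul_single_right: "ncmul f (Poly_Mapping.single B c) = lin (\<lambda>w a. Poly_Mapping.single (w@B) (a*c)) f"
  unfolding ncmul_lin by (rule lin_cong) (subst lin_single, auto)

lemma ncmul_single_left: "ncmul (Poly_Mapping.single A c) g = lin (\<lambda>w b. Poly_Mapping.single (A@w) (c*b)) g"
  unfolding ncmul_lin by (subst lin_single) auto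

lemma ncmul_add_left: "ncmul (f + g) h = ncmul f h + ncmul g h"
  unfolding ncmul_lin by (rule lin_add) (auto simp: distrib_right single_add lin_plus_fun)

lemma ncmul_zero_left [simp]: "ncmul 0 h = 0"
  by (simp add: ncmul_lin)

lemma nc_part_lin: "nc_part d f = lin (\<lambda>w c. if length w = d then Poly_Mapping.single w c else 0) f"
  unfolding nc_part_def lin_def by (simp add: sum.inter_filter)

lemma lookup_nc_part: "Poly_Mapping.lookup (nc_part d f) w = (if length w = d then Poly_Mapping.lookup f w else 0)"
proof -
  have "Poly_Mapping.lookup (nc_part d f) w = (\<Sum>v\<in>Poly_Mapping.keys f. if v = w then (if length w = d then Poly_Mapping.lookup f w else 0) else 0)"
    unfolding nc_part_lin lin_def lookup_sum by (intro sum.cong) (auto simp: lookup_single when_def)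
  also have "\<dots> = (if length w = d then Poly_Mapping.lookup f w else 0)"
    by (subst sum.delta) (auto simp: in_keys_iff)
  finally show ?thesis .
qed

lemma nc_decomp: "f = (\<Sum>e\<in>length ` Poly_Mapping.keys f. nc_part e f)"
proof (rule poly_mapping_eqI)
  fix w
  show "Poly_Mapping.lookup f w = Poly_Mapping.lookup (\<Sum>e\<in>length ` Poly_Mapping.keys f. nc_part e f) w"
    unfolding lookup_sum lookup_nc_part
    by (cases "w \<in> Poly_Mapping.keys f") (auto simp: in_keys_iff intro: sum.neutral)
qed

lemma keys_nc_part: "w \<in> Poly_Mapping.keys (nc_part e f) \<Longrightarrow> length w = e"
  by (auto simp: in_keys_iff lookup_nc_part split: if_splits)


definition Gset :: "('a,'k::field) ncpoly set \<Rightarrow> ('a,'k) lppoly set" where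
  "Gset I = ({lp_var i j * lp_var k j | i k j. True} \<union> (\<Union>k. (lp_sigma ^^ k) ` lp_iota ` I))"

lemma mod1: "module ((*) :: ('a,'k::field) lppoly \<Rightarrow> _)"
  by standard (auto simp: algebra_simps)

lemma K_span: "lp_Kideal I = module.span (*) (Gset I)"
  by (simp add: lp_Kideal_def ideal_gen_def Gset_def)

lemma K_add: "x \<in> lp_Kideal I \<Longrightarrow> y \<in> lp_Kideal I \<Longrightarrow> x + y \<in> lp_Kideal I"
  unfolding K_span by (rule module.span_add[OF mod1])

lemma K_mult: "x \<in> lp_Kideal I \<Longrightarrow> p * x \<in> lp_Kideal I"
  unfolding K_span by (rule module.span_scale[OF mod1])

lemma K_zero [simp]: "0 \<in> lp_Kideal I"
  unfolding K_span by (rule module.span_zero[OF mod1])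

lemma K_diff: "x \<in> lp_Kideal I \<Longrightarrow> y \<in> lp_Kideal I \<Longrightarrow> x - y \<in> lp_Kideal I"
  unfolding K_span by (rule module.span_diff[OF mod1])

lemma K_neg: "x \<in> lp_Kideal I \<Longrightarrow> - x \<in> lp_Kideal I"
  unfolding K_span by (rule module.span_neg[OF mod1])

lemma K_sum: "(\<And>x. x \<in> A \<Longrightarrow> f x \<in> lp_Kideal I) \<Longrightarrow> (\<Sum>x\<in>A. f x) \<in> lp_Kideal I"
  unfolding K_span by (rule module.span_sum[OF mod1])

lemma K_base: "g \<in> Gset I \<Longrightarrow> g \<in> lp_Kideal I"
  unfolding K_span by (rule module.span_base[OF mod1])

lemma K_io: "f \<in> I \<Longrightarrow> io k f \<in> lp_Kideal I"
proof -
  assume "f \<in> I"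
  then have "(lp_sigma ^^ k) (lp_iota f) \<in> Gset I" unfolding Gset_def by blast
  then show ?thesis using K_base sigma_pow_io by metis
qed

lemma lp_var_prod: "lp_var a j * lp_var b j = Poly_Mapping.single (Poly_Mapping.single (a,j) 1 + Poly_Mapping.single (b,j) 1) (1::'k::field)"
  by (simp add: lp_var_def mult_single)

lemma K_col: "Poly_Mapping.single (u + Poly_Mapping.single (a,j) 1 + Poly_Mapping.single (b,j) 1) (c::'k::field) \<in> lp_Kideal I"
proof -
  have "Poly_Mapping.single (u + Poly_Mapping.single (a,j) 1 + Poly_Mapping.single (b,j) 1) c
        = Poly_Mapping.single u c * (lp_var a j * lp_var b j)"
    by (simp add: lp_var_prod mult_single add.assoc)
  moreover have "lp_var a j * lp_var b j \<in> lp_Kideal I"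
    by (rule K_base) (auto simp: Gset_def)
  ultimately show ?thesis using K_mult by metis
qed

lemma Gset_cases:
  assumes "g \<in> Gset I"
  obtains a b j where "g = Poly_Mapping.single (Poly_Mapping.single (a,j) 1 + Poly_Mapping.single (b,j) 1) 1"
  | k f where "f \<in> I" "g = io k f"
  using assms unfolding Gset_def by (auto simp: lp_var_prod sigma_pow_io)

lemma closed_sum:
  assumes "0 \<in> S" "\<And>a b. a \<in> S \<Longrightarrow> b \<in> S \<Longrightarrow> a + b \<in> S" "\<And>x. x \<in> A \<Longrightarrow> f x \<in> S"
  shows "(\<Sum>x\<in>A. f x) \<in> S"
  using assms(3) by (induction A rule: infinite_finite_induct) (auto intro: assms(1,2))

lemma poly_expand: "r = (\<Sum>u\<in>Poly_Mapping.keys r. Poly_Mapping.single u (Poly_Mapping.lookup r u))"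
  using lin_expand[of r] by (simp add: lin_def)

lemma span_reduce:
  fixes T :: "('a,'k::field) lppoly \<Rightarrow> 'v::comm_monoid_add"
  assumes x: "x \<in> module.span (*) G" and T: "T 0 = 0" "\<And>a b. T (a+b) = T a + T b"
    and S: "0 \<in> S" "\<And>a b. a \<in> S \<Longrightarrow> b \<in> S \<Longrightarrow> a + b \<in> S"
    and gen: "\<And>u c g. g \<in> G \<Longrightarrow> T (Poly_Mapping.single u c * g) \<in> S"
  shows "T x \<in> S"
proof -
  obtain t r where t: "finite t" "t \<subseteq> G" and xe: "x = (\<Sum>a\<in>t. r a * a)"
    using x unfolding module.span_explicit[OF mod1] by auto
  have Tsum: "T (\<Sum>a\<in>A. f a) = (\<Sum>a\<in>A. T (f a))" for A and f :: "_ \<Rightarrow> ('a,'k) lppoly"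
    using sum_comp_morphism[of T f A, OF T] by (simp add: o_def)
  have one: "T (r a * a) \<in> S" if "a \<in> t" for a
  proof -
    have "r a * a = (\<Sum>u\<in>Poly_Mapping.keys (r a). Poly_Mapping.single u (Poly_Mapping.lookup (r a) u) * a)"
      by (subst poly_expand[of "r a"]) (simp add: sum_distrib_right)
    then have "T (r a * a) = (\<Sum>u\<in>Poly_Mapping.keys (r a). T (Poly_Mapping.single u (Poly_Mapping.lookup (r a) u) * a))"
      by (simp add: Tsum)
    also have "\<dots> \<in> S"
      by (rule closed_sum[OF S]) (use gen that t in auto)
    finally show ?thesis .
  qed
  show ?thesis unfolding xe Tsum by (rule closed_sum[OF S]) (use one in auto)
qed

lemma mult_io: "Poly_Mapping.single u c * io k f = lin (\<lambda>w x. Poly_Mapping.single (u + wm k w) (c*x)) f"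
  unfolding io_def by (subst lin_hom[where H="\<lambda>p. Poly_Mapping.single u c * p"]) (auto simp: distrib_left mult_single)

context
  fixes I :: "('a,'k::field) ncpoly set"
  assumes gi: "graded_two_sided_ideal I"
begin

lemma I_zero [simp]: "0 \<in> I" using gi by (simp add: graded_two_sided_ideal_def)
lemma I_add: "f \<in> I \<Longrightarrow> g \<in> I \<Longrightarrow> f + g \<in> I" using gi by (simp add: graded_two_sided_ideal_def)
lemma I_mulL: "f \<in> I \<Longrightarrow> ncmul g f \<in> I" using gi by (simp add: graded_two_sided_ideal_def)
lemma I_mulR: "f \<in> I \<Longrightarrow> ncmul f g \<in> I" using gi by (simp add: graded_two_sided_ideal_def)
lemma I_part: "f \<in> I \<Longrightarrow> nc_part d f \<in> I" using gi by (simp add: graded_two_sided_ideal_def)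
lemma I_sum: "(\<And>x. x \<in> A \<Longrightarrow> f x \<in> I) \<Longrightarrow> (\<Sum>x\<in>A. f x) \<in> I"
  by (rule closed_sum) (auto intro: I_add)

lemma I_scale: "f \<in> I \<Longrightarrow> Poly_Mapping.map ((*) c) f \<in> I"
proof -
  assume f: "f \<in> I"
  have "ncmul f (Poly_Mapping.single [] c) = Poly_Mapping.map ((*) c) f"
    unfolding ncmul_single_right
    by (subst (2) lin_expand[symmetric], subst lin_hom[where H="Poly_Mapping.map ((*) c)"])
       (auto simp: map_mult_add mult.commute)
  then show ?thesis using I_mulR[OF f] by metis
qed

lemma I_neg: "f \<in> I \<Longrightarrow> - f \<in> I"
proof -
  assume f: "f \<in> I"
  have e: "Poly_Mapping.map ((*) (-1)) f = - f"
    by (rule poly_mapping_eqI) (simp add: lookup_map_mult)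
  have "Poly_Mapping.map ((*) (-1)) f \<in> I" by (rule I_scale[OF f])
  then show ?thesis by (simp only: e)
qed

lemma I_diff: "f \<in> I \<Longrightarrow> g \<in> I \<Longrightarrow> f - g \<in> I"
proof -
  assume a: "f \<in> I" "g \<in> I"
  have "f + - g \<in> I" by (rule I_add[OF a(1) I_neg[OF a(2)]])
  then show ?thesis by (simp only: diff_conv_add_uminus)
qed

end


lemma if_le1: "(if C then (1::nat) else 0) \<le> 1" by simp

lemma lookup_wm_le1: "Poly_Mapping.lookup (wm \<delta> v) p \<le> 1"
  unfolding lookup_wm' by (rule if_le1)

lemma lookup_wm_nz: "Poly_Mapping.lookup (wm \<delta> v) (x,j) \<noteq> 0 \<Longrightarrow> v!(j-\<delta>) = x"
  unfolding lookup_wm if10 by blast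

lemma not_wm_col: "\<not> (\<exists>w. u + Poly_Mapping.single (a,j) 1 + Poly_Mapping.single (b,j) 1 = wm \<delta> w)"
proof
  assume "\<exists>w. u + Poly_Mapping.single (a,j) 1 + Poly_Mapping.single (b,j) 1 = wm \<delta> w"
  then obtain w where e: "u + Poly_Mapping.single (a,j) 1 + Poly_Mapping.single (b,j) 1 = wm \<delta> w" by blast
  have la: "Poly_Mapping.lookup (wm \<delta> w) (a,j) = Poly_Mapping.lookup u (a,j) + 1 + (if a = b then 1 else 0)"
    by (simp add: e[symmetric] lookup_add lookup_single when_def)
  have lb: "Poly_Mapping.lookup (wm \<delta> w) (b,j) = Poly_Mapping.lookup u (b,j) + (if a = b then 1 else 0) + 1"
    by (simp add: e[symmetric] lookup_add lookup_single when_def)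
  show False
  proof (cases "a = b")
    case True
    then show ?thesis using la lookup_wm_le1[of \<delta> w "(a,j)"] by simp
  next
    case False
    have "w!(j-\<delta>) = a" by (rule lookup_wm_nz) (simp add: la)
    moreover have "w!(j-\<delta>) = b" by (rule lookup_wm_nz) (simp add: lb)
    ultimately show ?thesis using False by simp
  qed
qed

lemma rho_col: "rho \<delta> (Poly_Mapping.single (u + Poly_Mapping.single (a,j) 1 + Poly_Mapping.single (b,j) 1) c) = 0"
  by (rule rho_single_not) (use not_wm_col in metis)

lemma wm_split2:
  assumes "u + wm k w = wm \<delta> v" "w \<noteq> []"
  shows "\<exists>A B. \<delta> + length A = k \<and> u = wm \<delta> A + wm (k + length w) B"
proof -
  from wm_split[OF assms] have h: "\<delta> \<le> k" "k + length w \<le> \<delta> + length v"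
     "u = wm \<delta> (take (k-\<delta>) v) + wm (k + length w) (drop (k-\<delta>+length w) v)" by auto
  have "\<delta> + length (take (k-\<delta>) v) = k" using h(1,2) by simp
  then show ?thesis using h(3) by blast
qed

context
  fixes I :: "('a,'k::field) ncpoly set"
  assumes gi: "graded_two_sided_ideal I"
begin

lemma rho_io_prod_hom:
  assumes f: "f \<in> I" and hom: "\<And>w. w \<in> Poly_Mapping.keys f \<Longrightarrow> length w = e"
  shows "rho \<delta> (Poly_Mapping.single u c * io k f) \<in> I"
proof -
  have eq: "rho \<delta> (Poly_Mapping.single u c * io k f) = lin (\<lambda>w x. rho \<delta> (Poly_Mapping.single (u + wm k w) (c*x))) f"
    unfolding mult_io by (subst lin_hom[where H="rho \<delta>"]) (auto simp: rho_add)
  show ?thesis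
  proof (cases "e = 0")
    case True
    have fe: "f = Poly_Mapping.single [] (Poly_Mapping.lookup f [])"
      by (rule poly_mapping_eqI) (use hom True in \<open>auto simp: lookup_single when_def in_keys_iff\<close>)
    have r: "rho \<delta> (Poly_Mapping.single u c * io k f) = rho \<delta> (Poly_Mapping.single u (c * Poly_Mapping.lookup f []))"
      unfolding eq by (subst fe, subst lin_single) auto
    show ?thesis
    proof (cases "\<exists>v. u = wm \<delta> v")
      case True
      then obtain v where v: "u = wm \<delta> v" by blast
      have "ncmul f (Poly_Mapping.single v c) = Poly_Mapping.single v (c * Poly_Mapping.lookup f [])"
        unfolding ncmul_single_right by (subst fe, subst lin_single) (auto simp: mult.commute)
      moreover have "rho \<delta> (Poly_Mapping.single u c * io k f) = Poly_Mapping.single v (c * Poly_Mapping.lookup f [])"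
        unfolding v r[unfolded v] by (rule rho_single_wm)
      ultimately show ?thesis using I_mulR[OF gi f, of "Poly_Mapping.single v c"] by simp
    next
      case False
      then show ?thesis unfolding r by (simp add: rho_single_not I_zero[OF gi])
    qed
  next
    case False
    show ?thesis
    proof (cases "\<exists>A B. \<delta> + length A = k \<and> u = wm \<delta> A + wm (k + e) B")
      case True
      then obtain A B where AB: "\<delta> + length A = k" "u = wm \<delta> A + wm (k + e) B" by blast
      have "rho \<delta> (Poly_Mapping.single u c * io k f) = lin (\<lambda>w x. Poly_Mapping.single (A@w@B) (c*x)) f"
        unfolding eq
      proof (rule lin_cong)
        fix w assume w: "w \<in> Poly_Mapping.keys f"
        have "u + wm k w = wm \<delta> (A@w@B)"
          using AB hom[OF w] by (simp add: wm_append ac_simps)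
        then show "rho \<delta> (Poly_Mapping.single (u + wm k w) (c * Poly_Mapping.lookup f w)) =
                   Poly_Mapping.single (A@w@B) (c * Poly_Mapping.lookup f w)" by simp
      qed
      also have "\<dots> = ncmul (ncmul (Poly_Mapping.single A c) f) (Poly_Mapping.single B 1)"
        unfolding ncmul_single_left
        by (subst lin_hom[where H="\<lambda>g. ncmul g (Poly_Mapping.single B 1)"])
           (auto simp: ncmul_single_right lin_single single_add intro!: lin_add)
      finally show ?thesis using I_mulR[OF gi I_mulL[OF gi f]] by metis
    next
      case nAB: False
      have "rho \<delta> (Poly_Mapping.single u c * io k f) = lin (\<lambda>w x. 0) f"
        unfolding eq
      proof (rule lin_cong)
        fix w assume w: "w \<in> Poly_Mapping.keys f"
        have "\<not> (\<exists>v. u + wm k w = wm \<delta> v)"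
        proof
          assume "\<exists>v. u + wm k w = wm \<delta> v"
          then obtain v where "u + wm k w = wm \<delta> v" by blast
          moreover have "w \<noteq> []" using hom[OF w] False by auto
          ultimately show False using wm_split2 nAB hom[OF w] by metis
        qed
        then show "rho \<delta> (Poly_Mapping.single (u + wm k w) (c * Poly_Mapping.lookup f w)) = 0"
          by (rule rho_single_not)
      qed
      then show ?thesis by (simp add: I_zero[OF gi])
    qed
  qed
qed

lemma rho_io_prod:
  assumes f: "f \<in> I"
  shows "rho \<delta> (Poly_Mapping.single u c * io k f) \<in> I"
proof -
  have "rho \<delta> (Poly_Mapping.single u c * io k f) =
     (\<Sum>e\<in>length ` Poly_Mapping.keys f. rho \<delta> (Poly_Mapping.single u c * io k (nc_part e f)))"
    by (subst nc_decomp) (simp add: io_sum sum_distrib_left rho_sum)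
  also have "\<dots> \<in> I"
    by (rule I_sum[OF gi], rule rho_io_prod_hom[OF I_part[OF gi f]]) (rule keys_nc_part)
  finally show ?thesis .
qed

lemma rho_K:
  assumes "x \<in> lp_Kideal I"
  shows "rho \<delta> x \<in> I"
  using assms unfolding K_span
proof (rule span_reduce)
  show "rho \<delta> 0 = 0" by simp
  show "rho \<delta> (a + b) = rho \<delta> a + rho \<delta> b" for a b by (rule rho_add)
  show "0 \<in> I" by (rule I_zero[OF gi])
  show "a + b \<in> I" if "a \<in> I" "b \<in> I" for a b by (rule I_add[OF gi that])
  fix u c g assume "g \<in> Gset I"
  then show "rho \<delta> (Poly_Mapping.single u c * g) \<in> I"
  proof (cases rule: Gset_cases)
    case (1 a b j)
    then show ?thesis by (simp only: mult_single add.assoc[symmetric] mult.right_neutral rho_col I_zero[OF gi])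
  next
    case (2 k f)
    then show ?thesis using rho_io_prod by simp
  qed
qed

end


lemma decomp_col:
  fixes u :: "('a \<times> nat) \<Rightarrow>\<^sub>0 nat"
  assumes a: "Poly_Mapping.lookup u (a,j) \<ge> 1" and b: "Poly_Mapping.lookup u (b,j) \<ge> (if a = b then 2 else 1)"
  shows "\<exists>u'. u = u' + Poly_Mapping.single (a,j) 1 + Poly_Mapping.single (b,j) 1"
proof -
  let ?s = "Poly_Mapping.single (a,j) 1 + Poly_Mapping.single (b,j) (1::nat)"
  have "u = (u - ?s) + Poly_Mapping.single (a,j) 1 + Poly_Mapping.single (b,j) 1"
  proof (rule poly_mapping_eqI)
    fix p
    show "Poly_Mapping.lookup u p = Poly_Mapping.lookup (u - ?s + Poly_Mapping.single (a,j) 1 + Poly_Mapping.single (b,j) 1) p"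
      unfolding lookup_add lookup_minus lookup_single when_def
      using a b by (cases "p = (a,j)"; cases "p = (b,j)"; cases "a = b") auto
  qed
  then show ?thesis by blast
qed

lemma pigeon:
  fixes u :: "('a::finite \<times> nat) \<Rightarrow>\<^sub>0 nat"
  assumes cols: "\<And>p. p \<in> Poly_Mapping.keys u \<Longrightarrow> \<delta> \<le> snd p \<and> snd p < d"
    and deg: "mdeg u = d - \<delta>"
    and nodec: "\<not> (\<exists>u' a b j. u = u' + Poly_Mapping.single (a,j) 1 + Poly_Mapping.single (b,j) 1)"
  shows "\<exists>w. u = wm \<delta> w"
proof -
  have le1: "Poly_Mapping.lookup u (x,j) \<le> 1" for x j
  proof (rule ccontr)
    assume "\<not> ?thesis"
    then have "\<exists>u'. u = u' + Poly_Mapping.single (x,j) 1 + Poly_Mapping.single (x,j) 1"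
      by (intro decomp_col) auto
    then show False using nodec by blast
  qed
  have uniq: "Poly_Mapping.lookup u (x,j) = 0 \<or> Poly_Mapping.lookup u (y,j) = 0" if "x \<noteq> y" for x y j
  proof (rule ccontr)
    assume "\<not> ?thesis"
    then have "\<exists>u'. u = u' + Poly_Mapping.single (x,j) 1 + Poly_Mapping.single (y,j) 1"
      using that by (intro decomp_col) auto
    then show False using nodec by blast
  qed
  define c where "c j = (\<Sum>x\<in>UNIV. Poly_Mapping.lookup u (x,j))" for j
  have cval: "c j = Poly_Mapping.lookup u (x,j)" if "Poly_Mapping.lookup u (x,j) \<noteq> 0" for x j
  proof -
    have "c j = Poly_Mapping.lookup u (x,j) + (\<Sum>y\<in>UNIV - {x}. Poly_Mapping.lookup u (y,j))"
      unfolding c_def by (rule sum.remove) auto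
    also have "(\<Sum>y\<in>UNIV - {x}. Poly_Mapping.lookup u (y,j)) = 0"
    proof (intro sum.neutral ballI)
      fix y assume "y \<in> UNIV - {x}"
      then have "y \<noteq> x" by auto
      then show "Poly_Mapping.lookup u (y,j) = 0" using uniq[of y x j] that by auto
    qed
    finally show ?thesis by simp
  qed
  have c0: "c j = 0" if "\<And>x. Poly_Mapping.lookup u (x,j) = 0" for j
    unfolding c_def using that by simp
  have cle: "c j \<le> 1" for j
    using cval c0 le1 by (metis le_numeral_extra(1) zero_le)
  have "mdeg u = (\<Sum>p\<in>UNIV \<times> {\<delta>..<d}. Poly_Mapping.lookup u p)"
    unfolding mdeg_def
    by (rule sum.mono_neutral_left) (use cols in \<open>auto simp: in_keys_iff\<close>)
  also have "\<dots> = (\<Sum>x\<in>UNIV. \<Sum>j\<in>{\<delta>..<d}. Poly_Mapping.lookup u (x,j))"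
    by (simp add: sum.cartesian_product)
  also have "\<dots> = (\<Sum>j\<in>{\<delta>..<d}. c j)"
    unfolding c_def by (rule sum.swap)
  finally have csum: "(\<Sum>j\<in>{\<delta>..<d}. c j) = d - \<delta>" using deg by simp
  have c1: "c j = 1" if j: "j \<in> {\<delta>..<d}" for j
  proof (rule ccontr)
    assume "c j \<noteq> 1"
    then have cj: "c j = 0" using cle[of j] by simp
    have "(\<Sum>j\<in>{\<delta>..<d}. c j) = c j + (\<Sum>i\<in>{\<delta>..<d} - {j}. c i)"
      by (rule sum.remove) (use j in auto)
    also have "\<dots> \<le> 0 + (\<Sum>i\<in>{\<delta>..<d} - {j}. 1)"
      using cj cle by (intro add_mono sum_mono) auto
    also have "\<dots> = d - \<delta> - 1" using j by simp
    finally show False using csum j by simp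
  qed
  define w where "w = map (\<lambda>j. SOME x. Poly_Mapping.lookup u (x,j) \<noteq> 0) [\<delta>..<d]"
  have ex: "\<exists>x. Poly_Mapping.lookup u (x,j) \<noteq> 0" if "j \<in> {\<delta>..<d}" for j
    using c1[OF that] c0 by force
  have "u = wm \<delta> w"
  proof (rule poly_mapping_eqI)
    fix p :: "'a \<times> nat"
    obtain x j where p: "p = (x,j)" by fastforce
    show "Poly_Mapping.lookup u p = Poly_Mapping.lookup (wm \<delta> w) p"
    proof (cases "j \<in> {\<delta>..<d}")
      case False
      then have "p \<notin> Poly_Mapping.keys u" using cols p by fastforce
      moreover have "\<not> (\<delta> \<le> j \<and> j < \<delta> + length w)" using False by (auto simp: w_def)
      ultimately show ?thesis unfolding p lookup_wm by (simp add: in_keys_iff; blast)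
    next
      case True
      define x0 where "x0 = (SOME x. Poly_Mapping.lookup u (x,j) \<noteq> 0)"
      have x0: "Poly_Mapping.lookup u (x0,j) \<noteq> 0" unfolding x0_def using someI_ex[OF ex[OF True]] .
      have wj: "w!(j-\<delta>) = x0" "\<delta> \<le> j \<and> j < \<delta> + length w"
        using True by (auto simp: w_def x0_def)
      have "Poly_Mapping.lookup u (x,j) = (if x = x0 then 1 else 0)"
      proof (cases "x = x0")
        case True
        then show ?thesis using le1[of x0 j] x0 by simp
      next
        case False
        then show ?thesis using uniq[OF False, of j] x0 by simp
      qed
      then show ?thesis unfolding p lookup_wm using wj by auto
    qed
  qed
  then show ?thesis by blast
qed


definition hpart :: "int \<Rightarrow> ('a,'k::field) lppoly \<Rightarrow> ('a,'k) lppoly" where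
  "hpart e p = lin (\<lambda>m c. if int (mdeg m) = e then Poly_Mapping.single m c else 0) p"

lemma hpart_add: "hpart e (p + q) = hpart e p + hpart e q"
  unfolding hpart_def by (rule lin_add) (auto simp: single_add)

lemma hpart_zero [simp]: "hpart e 0 = 0"
  by (simp add: hpart_def)

lemma hpart_minus: "hpart e (p - q) = hpart e p - hpart e q"
  unfolding hpart_def by (rule lin_minus) (auto simp: single_add)

lemma hpart_single: "hpart e (Poly_Mapping.single m c) = (if int (mdeg m) = e then Poly_Mapping.single m c else 0)"
  unfolding hpart_def by (rule lin_single) auto

lemma keys_hpart: "Poly_Mapping.keys (hpart e p) \<subseteq> {m \<in> Poly_Mapping.keys p. int (mdeg m) = e}"
proof -
  have "Poly_Mapping.keys (hpart e p) \<subseteq> (\<Union>m\<in>Poly_Mapping.keys p. {m' \<in> {m}. int (mdeg m') = e})"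
    unfolding hpart_def by (rule lin_keys) auto
  then show ?thesis by auto
qed

lemma hpart_homog_id: "lp_homog e q \<Longrightarrow> hpart e q = q"
  unfolding hpart_def lp_homog_def
  by (subst (2) lin_expand[symmetric], rule lin_cong) auto

lemma homog_hpart: "lp_homog e (hpart e p)"
  using keys_hpart unfolding lp_homog_def by blast

lemma vars_hpart: "lp_in_vars a b p \<Longrightarrow> lp_in_vars a b (hpart e p)"
  using keys_hpart unfolding lp_in_vars_def by blast

context
  fixes I :: "('a::finite,'k::field) ncpoly set"
  assumes gi: "graded_two_sided_ideal I"
begin

lemma hpart_io_prod:
  assumes f: "f \<in> I"
  shows "hpart e (Poly_Mapping.single u c * io k f) \<in> lp_Kideal I"
proof -
  have eq: "hpart e (Poly_Mapping.single u c * io k f) =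
     lin (\<lambda>w x. if int (mdeg u + length w) = e then Poly_Mapping.single (u + wm k w) (c*x) else 0) f"
    unfolding mult_io by (subst lin_hom[where H="hpart e"]) (auto simp: hpart_add hpart_single mdeg_add)
  show ?thesis
  proof (cases "e < int (mdeg u)")
    case True
    have "hpart e (Poly_Mapping.single u c * io k f) = lin (\<lambda>w x. 0) f"
      unfolding eq by (rule lin_cong) (use True in auto)
    then show ?thesis by simp
  next
    case False
    define t where "t = nat (e - int (mdeg u))"
    have "hpart e (Poly_Mapping.single u c * io k f) = Poly_Mapping.single u c * io k (nc_part t f)"
      unfolding eq using False
      by (unfold mult_io nc_part_lin, subst lin_hom[where H="lin (\<lambda>w x. Poly_Mapping.single (u + wm k w) (c * x))"])
         (auto simp: single_add distrib_left lin_single t_def intro!: lin_add lin_cong)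
    also have "\<dots> \<in> lp_Kideal I"
      by (rule K_mult, rule K_io, rule I_part[OF gi f])
    finally show ?thesis .
  qed
qed

lemma hpart_K:
  assumes "x \<in> lp_Kideal I"
  shows "hpart e x \<in> lp_Kideal I"
  using assms unfolding K_span
proof (rule span_reduce)
  show "hpart e 0 = 0" by simp
  show "hpart e (a + b) = hpart e a + hpart e b" for a b by (rule hpart_add)
  show "0 \<in> module.span (*) (Gset I)" using K_zero unfolding K_span .
  show "a + b \<in> module.span (*) (Gset I)" if "a \<in> module.span (*) (Gset I)" "b \<in> module.span (*) (Gset I)" for a b
    using K_add that unfolding K_span by blast
  fix u c g assume "g \<in> Gset I"
  then show "hpart e (Poly_Mapping.single u c * g) \<in> module.span (*) (Gset I)"
  proof (cases rule: Gset_cases)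
    case (1 a b j)
    have "Poly_Mapping.single u c * g = Poly_Mapping.single (u + Poly_Mapping.single (a,j) 1 + Poly_Mapping.single (b,j) 1) c"
      by (simp only: 1 mult_single add.assoc[symmetric] mult.right_neutral)
    then show ?thesis using K_col[of u a j b c I] K_zero[of I] unfolding K_span by (simp add: hpart_single)
  next
    case (2 k f)
    then show ?thesis using hpart_io_prod unfolding K_span by simp
  qed
qed

lemma comp_reduce:
  assumes hom: "lp_homog (int d - int \<delta>) p" and vars: "lp_in_vars \<delta> d p"
  shows "p - io \<delta> (rho \<delta> p) \<in> lp_Kideal I"
proof -
  have one: "Poly_Mapping.single u (Poly_Mapping.lookup p u) - io \<delta> (rho \<delta> (Poly_Mapping.single u (Poly_Mapping.lookup p u))) \<in> lp_Kideal I"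
    if u: "u \<in> Poly_Mapping.keys p" for u
  proof (cases "\<exists>w. u = wm \<delta> w")
    case True
    then obtain w where "u = wm \<delta> w" by blast
    then show ?thesis by simp
  next
    case False
    have cols: "\<delta> \<le> snd q \<and> snd q < d" if "q \<in> Poly_Mapping.keys u" for q
      using vars u that unfolding lp_in_vars_def by blast
    have "int (mdeg u) = int d - int \<delta>" using hom u unfolding lp_homog_def by blast
    then have deg: "mdeg u = d - \<delta>" by linarith
    from pigeon[OF cols deg] False obtain u' a b j where
      "u = u' + Poly_Mapping.single (a,j) 1 + Poly_Mapping.single (b,j) 1" by blast
    then have "Poly_Mapping.single u (Poly_Mapping.lookup p u) \<in> lp_Kideal I" using K_col by metis
    then show ?thesis by (simp only: rho_single_not[OF False] io_zero diff_zero)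
  qed
  have "p - io \<delta> (rho \<delta> p) = (\<Sum>u\<in>Poly_Mapping.keys p. Poly_Mapping.single u (Poly_Mapping.lookup p u) - io \<delta> (rho \<delta> (Poly_Mapping.single u (Poly_Mapping.lookup p u))))"
    by (subst (1 2) poly_expand[of p]) (simp only: rho_sum io_sum sum_subtractf)
  also have "\<dots> \<in> lp_Kideal I" by (rule K_sum) (rule one)
  finally show ?thesis .
qed

end


lemma rho_term_wm:
  assumes B: "B \<noteq> []" and u: "u = wm D B"
  shows "rho \<delta> (Poly_Mapping.single (u + wm \<delta> w) x) = (if \<delta> + length w = D then Poly_Mapping.single (w@B) x else 0)"
proof (cases "\<delta> + length w = D")
  case True
  have "u + wm \<delta> w = wm \<delta> (w@B)" using True u by (simp add: wm_append add.commute)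
  then show ?thesis using True by simp
next
  case False
  have "\<not> (\<exists>v. u + wm \<delta> w = wm \<delta> v)"
  proof
    assume "\<exists>v. u + wm \<delta> w = wm \<delta> v"
    then obtain v where v: "u + wm \<delta> w = wm \<delta> v" by blast
    show False
    proof (cases "w = []")
      case True
      then have "wm D B = wm \<delta> v" using v u by simp
      from wm_inj2[OF this B] have "D = \<delta>" by blast
      then show False using False True by simp
    next
      case nw: False
      from wm_split2[OF v nw] obtain A B' where "\<delta> + length A = \<delta>" "u = wm \<delta> A + wm (\<delta> + length w) B'" by blast
      then have "wm D B = wm (\<delta> + length w) B'" using u by simp
      from wm_inj2[OF this B] have "D = \<delta> + length w" by blast
      then show False using False by simp
    qed
  qed
  then show ?thesis using False by (simp add: rho_single_not)
qed

lemma rho_term_none: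
  assumes u0: "u \<noteq> 0" and nB: "\<not> (\<exists>D B. B \<noteq> [] \<and> u = wm D B)"
  shows "rho \<delta> (Poly_Mapping.single (u + wm \<delta> w) x) = 0"
proof (rule rho_single_not)
  show "\<not> (\<exists>v. u + wm \<delta> w = wm \<delta> v)"
  proof
    assume "\<exists>v. u + wm \<delta> w = wm \<delta> v"
    then obtain v where v: "u + wm \<delta> w = wm \<delta> v" by blast
    show False
    proof (cases "w = []")
      case True
      then have "u = wm \<delta> v" using v by simp
      moreover have "v \<noteq> []" using u0 calculation by auto
      ultimately show False using nB by blast
    next
      case nw: False
      from wm_split2[OF v nw] obtain A B' where "\<delta> + length A = \<delta>" "u = wm \<delta> A + wm (\<delta> + length w) B'" by blast
      then have u': "u = wm (\<delta> + length w) B'" by simp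
      then have "B' \<noteq> []" using u0 by auto
      then show False using nB u' by blast
    qed
  qed
qed

lemma rho_mult_io: "rho \<delta> (Poly_Mapping.single u c * io \<delta> f) = lin (\<lambda>w x. rho \<delta> (Poly_Mapping.single (u + wm \<delta> w) (c*x))) f"
  unfolding mult_io by (subst lin_hom[where H="rho \<delta>"]) (auto simp: rho_add)

lemma ncmul_part_single: "ncmul (nc_part t f) (Poly_Mapping.single B c) =
   lin (\<lambda>w x. if length w = t then Poly_Mapping.single (w@B) (x*c) else 0) f"
  unfolding ncmul_single_right nc_part_lin
  by (subst lin_hom[where H="lin (\<lambda>w a. Poly_Mapping.single (w @ B) (a * c))"])
     (auto simp: single_add distrib_right lin_single intro!: lin_add lin_cong)

definition rhoM :: "('b \<Rightarrow> nat) \<Rightarrow> ('b \<Rightarrow> ('a,'k::field) lppoly) \<Rightarrow> ('b \<Rightarrow> ('a,'k) ncpoly)" where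
  "rhoM \<delta> h = (\<lambda>i. rho (\<delta> i) (h i))"

context
  fixes I :: "('a::finite,'k::field) ncpoly set" and \<delta> :: "'b::finite \<Rightarrow> nat" and M
  assumes gi: "graded_two_sided_ideal I" and gm: "graded_right_submodule_pre I \<delta> M"
begin

lemma M_I: "(\<And>i. m i \<in> I) \<Longrightarrow> m \<in> M" using gm by (simp add: graded_right_submodule_pre_def)
lemma M_add: "m \<in> M \<Longrightarrow> m' \<in> M \<Longrightarrow> m + m' \<in> M"
  using gm unfolding graded_right_submodule_pre_def plus_fun_def by blast
lemma M_mul: "m \<in> M \<Longrightarrow> (\<lambda>i. ncmul (m i) g) \<in> M" using gm by (simp add: graded_right_submodule_pre_def)
lemma M_part: "m \<in> M \<Longrightarrow> mod_part \<delta> d m \<in> M" using gm by (simp add: graded_right_submodule_pre_def)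
lemma M_zero: "0 \<in> M" by (rule M_I) (simp add: I_zero[OF gi])
lemma M_sum: "(\<And>x. x \<in> A \<Longrightarrow> f x \<in> M) \<Longrightarrow> (\<Sum>x\<in>A. f x) \<in> M"
  by (rule closed_sum[OF M_zero]) (auto intro: M_add)

lemma rhoM_single_io:
  assumes m: "m \<in> M"
  shows "rhoM \<delta> (\<lambda>i. Poly_Mapping.single u c * io (\<delta> i) (m i)) \<in> M"
proof (cases "\<exists>D B. B \<noteq> [] \<and> u = wm D B")
  case True
  then obtain D B where B: "B \<noteq> []" "u = wm D B" by blast
  have "rhoM \<delta> (\<lambda>i. Poly_Mapping.single u c * io (\<delta> i) (m i)) = (\<lambda>i. ncmul (mod_part \<delta> D m i) (Poly_Mapping.single B c))"
  proof
    fix i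
    have l: "rho (\<delta> i) (Poly_Mapping.single u c * io (\<delta> i) (m i)) =
       lin (\<lambda>w x. if \<delta> i + length w = D then Poly_Mapping.single (w@B) (c*x) else 0) (m i)"
      unfolding rho_mult_io by (rule lin_cong) (simp add: rho_term_wm[OF B])
    show "rhoM \<delta> (\<lambda>i. Poly_Mapping.single u c * io (\<delta> i) (m i)) i = ncmul (mod_part \<delta> D m i) (Poly_Mapping.single B c)"
    proof (cases "\<delta> i \<le> D")
      case True
      have "ncmul (mod_part \<delta> D m i) (Poly_Mapping.single B c) = 
        lin (\<lambda>w x. if length w = D - \<delta> i then Poly_Mapping.single (w@B) (x*c) else 0) (m i)"
        using True by (simp add: mod_part_def ncmul_part_single)
      then show ?thesis unfolding rhoM_def l using True
        by (auto intro!: lin_cong simp: mult.commute)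
    next
      case False
      then show ?thesis unfolding rhoM_def l mod_part_def
        by (auto intro!: lin_cong)
    qed
  qed
  then show ?thesis using M_mul[OF M_part[OF m]] by metis
next
  case nB: False
  show ?thesis
  proof (cases "u = 0")
    case True
    have "rhoM \<delta> (\<lambda>i. Poly_Mapping.single u c * io (\<delta> i) (m i)) = (\<lambda>i. ncmul (m i) (Poly_Mapping.single [] c))"
    proof
      fix i
      show "rhoM \<delta> (\<lambda>i. Poly_Mapping.single u c * io (\<delta> i) (m i)) i = ncmul (m i) (Poly_Mapping.single [] c)"
        unfolding rhoM_def rho_mult_io ncmul_single_right True by (auto intro!: lin_cong simp: mult.commute)
    qed
    then show ?thesis using M_mul[OF m] by metis
  next
    case False
    have "rhoM \<delta> (\<lambda>i. Poly_Mapping.single u c * io (\<delta> i) (m i)) = 0"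
    proof
      fix i
      show "rhoM \<delta> (\<lambda>i. Poly_Mapping.single u c * io (\<delta> i) (m i)) i = 0 i"
        unfolding rhoM_def rho_mult_io by (simp add: rho_term_none[OF False nB])
    qed
    then show ?thesis using M_zero by simp
  qed
qed

lemma rhoM_prod_io:
  assumes m: "m \<in> M"
  shows "rhoM \<delta> (\<lambda>i. p * io (\<delta> i) (m i)) \<in> M"
proof -
  have "rhoM \<delta> (\<lambda>i. p * io (\<delta> i) (m i)) =
     (\<Sum>u\<in>Poly_Mapping.keys p. rhoM \<delta> (\<lambda>i. Poly_Mapping.single u (Poly_Mapping.lookup p u) * io (\<delta> i) (m i)))"
  proof
    fix i
    show "rhoM \<delta> (\<lambda>i. p * io (\<delta> i) (m i)) i = (\<Sum>u\<in>Poly_Mapping.keys p. rhoM \<delta> (\<lambda>i. Poly_Mapping.single u (Poly_Mapping.lookup p u) * io (\<delta> i) (m i))) i"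
      unfolding sum_fun_apply rhoM_def
      by (subst poly_expand[of p]) (simp add: sum_distrib_right rho_sum)
  qed
  also have "\<dots> \<in> M" by (rule M_sum) (rule rhoM_single_io[OF m])
  finally show ?thesis .
qed

lemma mod2: "module (\<lambda>(p::('a,'k) lppoly) (v::'b \<Rightarrow> ('a,'k) lppoly). (\<lambda>i. p * v i))"
  by standard (auto simp: algebra_simps fun_eq_iff)

lemma iota_mod_io: "lp_iota_mod \<delta> m = (\<lambda>i. io (\<delta> i) (m i))"
  by (simp add: lp_iota_mod_def sigma_pow_io)

lemma rhoM_L:
  assumes h: "h \<in> L_pre I \<delta> M"
  shows "rhoM \<delta> h \<in> M"
proof -
  obtain g where g: "g \<in> module.span (\<lambda>p v. (\<lambda>i. p * v i)) (lp_iota_mod \<delta> ` M)"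
    and hg: "\<And>i. h i - g i \<in> lp_Kideal I"
    using h unfolding L_pre_def by blast
  obtain t r where t: "finite t" "t \<subseteq> lp_iota_mod \<delta> ` M" and ge: "g = (\<Sum>a\<in>t. (\<lambda>i. r a * a i))"
    using g unfolding module.span_explicit[OF mod2] by blast
  have rg: "rhoM \<delta> g = (\<Sum>a\<in>t. rhoM \<delta> (\<lambda>i. r a * a i))"
    unfolding ge rhoM_def by (rule ext) (simp add: sum_fun_apply rho_sum)
  have "rhoM \<delta> (\<lambda>i. r a * a i) \<in> M" if at: "a \<in> t" for a
  proof -
    obtain m where "m \<in> M" "a = lp_iota_mod \<delta> m" using t at by blast
    then show ?thesis unfolding iota_mod_io using rhoM_prod_io by simp
  qed
  then have "rhoM \<delta> g \<in> M" unfolding rg by (rule M_sum)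
  moreover have "rhoM \<delta> h = (\<lambda>i. rho (\<delta> i) (h i - g i)) + rhoM \<delta> g"
    by (rule ext) (simp add: rhoM_def rho_minus)
  moreover have "(\<lambda>i. rho (\<delta> i) (h i - g i)) \<in> M"
    by (rule M_I) (rule rho_K[OF gi hg])
  ultimately show ?thesis using M_add by metis
qed

end


lemma homog_io:
  assumes "nc_homog (int d - int \<delta>) f"
  shows "lp_homog (int d - int \<delta>) (io \<delta> f) \<and> lp_in_vars \<delta> d (io \<delta> f)"
proof -
  have k: "\<exists>w\<in>Poly_Mapping.keys f. m = wm \<delta> w" if "m \<in> Poly_Mapping.keys (io \<delta> f)" for m
    using keys_io that by blast
  have A: "int (mdeg m) = int d - int \<delta>" if mk: "m \<in> Poly_Mapping.keys (io \<delta> f)" for m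
  proof -
    obtain w where w: "w \<in> Poly_Mapping.keys f" "m = wm \<delta> w" using k mk by blast
    have lw: "int (length w) = int d - int \<delta>" using assms w(1) unfolding nc_homog_def by blast
    show ?thesis using w lw by simp
  qed
  have B: "\<delta> \<le> snd ij \<and> snd ij < d" if mk: "m \<in> Poly_Mapping.keys (io \<delta> f)" "ij \<in> Poly_Mapping.keys m" for m ij
  proof -
    obtain w where w: "w \<in> Poly_Mapping.keys f" "m = wm \<delta> w" using k mk(1) by blast
    have lw: "int (length w) = int d - int \<delta>" using assms w(1) unfolding nc_homog_def by blast
    obtain k where "k < length w" "ij = (w!k, \<delta>+k)" using w(2) keys_wm mk(2) by blast
    then show ?thesis using lw by auto
  qed
  show ?thesis unfolding lp_homog_def lp_in_vars_def using A B by blast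
qed

context
  fixes I :: "('a::finite,'k::field) ncpoly set" and \<delta> :: "'b::finite \<Rightarrow> nat" and M
  assumes gi: "graded_two_sided_ideal I" and gm: "graded_right_submodule_pre I \<delta> M"
begin

lemma sub1: "iota_Md_pre I \<delta> M d \<subseteq> Lcut_pre I \<delta> M d"
proof
  fix h assume "h \<in> iota_Md_pre I \<delta> M d"
  then obtain m where m: "m \<in> M" "mod_homog \<delta> d m" and hm: "\<And>i. h i - lp_iota_mod \<delta> m i \<in> lp_Kideal I"
    unfolding iota_Md_pre_def by blast
  have "h \<in> L_pre I \<delta> M"
    unfolding L_pre_def using m(1) hm module.span_base[OF mod2[OF gi gm]] by blast
  moreover have "(\<exists>p. lp_in_vars (\<delta> i) d p \<and> h i - p \<in> lp_Kideal I) \<and>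
        (\<exists>q. lp_homog (int d - int (\<delta> i)) q \<and> h i - q \<in> lp_Kideal I)" for i
  proof -
    have "nc_homog (int d - int (\<delta> i)) (m i)" using m(2) unfolding mod_homog_def by blast
    moreover have "h i - io (\<delta> i) (m i) \<in> lp_Kideal I" using hm[of i] unfolding iota_mod_io[OF gi gm] by simp
    ultimately show ?thesis using homog_io by blast
  qed
  ultimately show "h \<in> Lcut_pre I \<delta> M d" unfolding Lcut_pre_def by blast
qed

lemma sub2: "Lcut_pre I \<delta> M d \<subseteq> iota_Md_pre I \<delta> M d"
proof
  fix h assume h: "h \<in> Lcut_pre I \<delta> M d"
  then have hL: "h \<in> L_pre I \<delta> M" unfolding Lcut_pre_def by blast
  have "\<exists>p'. lp_homog (int d - int (\<delta> i)) p' \<and> lp_in_vars (\<delta> i) d p' \<and> h i - p' \<in> lp_Kideal I" for i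
  proof -
    obtain p q where p: "lp_in_vars (\<delta> i) d p" "h i - p \<in> lp_Kideal I"
      and q: "lp_homog (int d - int (\<delta> i)) q" "h i - q \<in> lp_Kideal I"
      using h unfolding Lcut_pre_def by blast
    define e where "e = int d - int (\<delta> i)"
    define p' where "p' = hpart e p"
    have "q - p = (h i - p) - (h i - q)" by simp
    then have "q - p \<in> lp_Kideal I" using K_diff p(2) q(2) by metis
    then have "hpart e (q - p) \<in> lp_Kideal I" by (rule hpart_K[OF gi])
    moreover have "hpart e (q - p) = q - p'"
      unfolding p'_def hpart_minus using hpart_homog_id q(1) e_def by simp
    ultimately have "h i - q + (q - p') \<in> lp_Kideal I" using K_add q(2) by metis
    then have "h i - p' \<in> lp_Kideal I" by simp
    moreover have "lp_homog e p'" unfolding p'_def by (rule homog_hpart)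
    moreover have "lp_in_vars (\<delta> i) d p'" unfolding p'_def by (rule vars_hpart[OF p(1)])
    ultimately show ?thesis using e_def by blast
  qed
  then obtain P where P: "\<And>i. lp_homog (int d - int (\<delta> i)) (P i)" "\<And>i. lp_in_vars (\<delta> i) d (P i)"
     "\<And>i. h i - P i \<in> lp_Kideal I"
    by metis
  define m where "m = rhoM \<delta> P"
  have "m = rhoM \<delta> h + (\<lambda>i. - rho (\<delta> i) (h i - P i))"
    unfolding m_def rhoM_def by (rule ext) (simp add: rho_minus)
  moreover have "(\<lambda>i. - rho (\<delta> i) (h i - P i)) \<in> M"
    by (rule M_I[OF gi gm], rule I_neg[OF gi], rule rho_K[OF gi P(3)])
  ultimately have mM: "m \<in> M" using M_add[OF gi gm] rhoM_L[OF gi gm hL] by metis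
  have mh: "mod_homog \<delta> d m"
    unfolding mod_homog_def nc_homog_def
  proof (intro allI ballI)
    fix i w assume "w \<in> Poly_Mapping.keys (m i)"
    then have "wm (\<delta> i) w \<in> Poly_Mapping.keys (P i)" using keys_rho unfolding m_def rhoM_def by blast
    then have "int (mdeg (wm (\<delta> i) w)) = int d - int (\<delta> i)" using P(1) unfolding lp_homog_def by blast
    then show "int (length w) = int d - int (\<delta> i)" by simp
  qed
  have "h i - lp_iota_mod \<delta> m i \<in> lp_Kideal I" for i
  proof -
    have "h i - lp_iota_mod \<delta> m i = (h i - P i) + (P i - io (\<delta> i) (rho (\<delta> i) (P i)))"
      unfolding iota_mod_io[OF gi gm] m_def rhoM_def by simp
    also have "\<dots> \<in> lp_Kideal I"
      by (rule K_add[OF P(3) comp_reduce[OF gi P(1) P(2)]])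
    finally show ?thesis .
  qed
  then show "h \<in> iota_Md_pre I \<delta> M d" unfolding iota_Md_pre_def using mM mh by blast
qed

lemma part1: "iota_Md_pre I \<delta> M d = Lcut_pre I \<delta> M d"
  using sub1 sub2 by blast

end


lemma map_mult_one [simp]: "Poly_Mapping.map ((*) (1::'c::semiring_1)) p = p"
  by (rule poly_mapping_eqI) (simp add: lookup_map_mult)

lemma map_mult_zero_c [simp]: "Poly_Mapping.map ((*) (0::'c::semiring_0)) p = 0"
  by (rule poly_mapping_eqI) (simp add: lookup_map_mult)

lemma map_mult_plus: "Poly_Mapping.map ((*) ((a::'c::semiring_0) + b)) p = Poly_Mapping.map ((*) a) p + Poly_Mapping.map ((*) b) p"
  by (rule poly_mapping_eqI) (simp add: lookup_map_mult lookup_add distrib_right)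

lemma map_mult_sum: "Poly_Mapping.map ((*) (a::'c::semiring_0)) (\<Sum>x\<in>A. f x) = (\<Sum>x\<in>A. Poly_Mapping.map ((*) a) (f x))"
  using sum_comp_morphism[of "Poly_Mapping.map ((*) a)" f A] by (simp add: map_mult_add o_def)

context
  fixes I :: "('a::finite,'k::field) ncpoly set" and \<delta> :: "'b::finite \<Rightarrow> nat" and M
  assumes gi: "graded_two_sided_ideal I" and gm: "graded_right_submodule_pre I \<delta> M"
begin

lemma iotaM_sum: "lp_iota_mod \<delta> (\<Sum>b\<in>B. nc_scale (c b) (f b)) = (\<Sum>b\<in>B. lp_scale (c b) (lp_iota_mod \<delta> (f b)))"
  unfolding iota_mod_io[OF gi gm] nc_scale_def lp_scale_def
  by (rule ext) (simp add: sum_fun_apply io_sum io_scale)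

lemma rhoM_sum: "rhoM \<delta> (\<Sum>b\<in>B. lp_scale (c b) (f b)) = (\<Sum>b\<in>B. nc_scale (c b) (rhoM \<delta> (f b)))"
  unfolding rhoM_def nc_scale_def lp_scale_def
  by (rule ext) (simp add: sum_fun_apply rho_sum rho_scale)

lemma rhoM_iota [simp]: "rhoM \<delta> (lp_iota_mod \<delta> m) = m"
  unfolding rhoM_def iota_mod_io[OF gi gm] by simp

lemma W2_sum: "(\<And>x. x \<in> A \<Longrightarrow> (\<forall>i. f x i \<in> lp_Kideal I)) \<Longrightarrow> \<forall>i. (\<Sum>x\<in>A. f x) i \<in> lp_Kideal I"
  unfolding sum_fun_apply by (blast intro: K_sum)

lemma W2_scale: "(\<forall>i. h i \<in> lp_Kideal I) \<Longrightarrow> \<forall>i. lp_scale c h i \<in> lp_Kideal I"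
  unfolding lp_scale_def mult_map_scale_conv_mult by (blast intro: K_mult)

lemma cards_le1:
  assumes B: "B \<subseteq> {m \<in> M. mod_homog \<delta> d m}" and ind: "indep_mod nc_scale {m. \<forall>i. m i \<in> I} B"
  shows "\<exists>B'. card B' = card B \<and> B' \<subseteq> Lcut_pre I \<delta> M d \<and> indep_mod lp_scale {h. \<forall>i. h i \<in> lp_Kideal I} B'"
proof -
  let ?B' = "lp_iota_mod \<delta> ` B"
  have inj: "inj_on (lp_iota_mod \<delta>) B"
    by (rule inj_onI) (metis rhoM_iota)
  have fin: "finite B" using ind unfolding indep_mod_def by blast
  have sub: "?B' \<subseteq> Lcut_pre I \<delta> M d"
  proof
    fix h assume "h \<in> ?B'"
    then obtain m where "m \<in> B" "h = lp_iota_mod \<delta> m" by blast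
    then have "h \<in> iota_Md_pre I \<delta> M d" using B unfolding iota_Md_pre_def by auto
    then show "h \<in> Lcut_pre I \<delta> M d" using part1[OF gi gm] by blast
  qed
  have "indep_mod lp_scale {h. \<forall>i. h i \<in> lp_Kideal I} ?B'"
    unfolding indep_mod_def
  proof (intro conjI allI impI)
    show "finite ?B'" using fin by simp
    fix c assume "(\<Sum>b\<in>?B'. lp_scale (c b) b) \<in> {h. \<forall>i. h i \<in> lp_Kideal I}"
    then have "\<forall>i. (\<Sum>b\<in>B. lp_scale (c (lp_iota_mod \<delta> b)) (lp_iota_mod \<delta> b)) i \<in> lp_Kideal I"
      by (simp add: sum.reindex[OF inj])
    then have "\<forall>i. rhoM \<delta> (\<Sum>b\<in>B. lp_scale (c (lp_iota_mod \<delta> b)) (lp_iota_mod \<delta> b)) i \<in> I"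
      unfolding rhoM_def using rho_K[OF gi] by blast
    then have "(\<Sum>b\<in>B. nc_scale (c (lp_iota_mod \<delta> b)) b) \<in> {m. \<forall>i. m i \<in> I}"
      unfolding rhoM_sum by simp
    moreover have "\<forall>c. (\<Sum>b\<in>B. nc_scale (c b) b) \<in> {m. \<forall>i. m i \<in> I} \<longrightarrow> (\<forall>b\<in>B. c b = 0)"
      using ind unfolding indep_mod_def by blast
    ultimately have "\<forall>b\<in>B. c (lp_iota_mod \<delta> b) = 0"
      using spec[of _ "\<lambda>b. c (lp_iota_mod \<delta> b)"] by blast
    then show "\<forall>b\<in>?B'. c b = 0" by blast
  qed
  moreover have "card ?B' = card B" by (rule card_image[OF inj])
  ultimately show ?thesis using sub by blast
qed

lemma cards_le2:
  assumes B: "B \<subseteq> Lcut_pre I \<delta> M d" and ind: "indep_mod lp_scale {h. \<forall>i. h i \<in> lp_Kideal I} B"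
  shows "\<exists>B'. card B' = card B \<and> B' \<subseteq> {m \<in> M. mod_homog \<delta> d m} \<and> indep_mod nc_scale {m. \<forall>i. m i \<in> I} B'"
proof -
  define P where "P h m \<longleftrightarrow> m \<in> M \<and> mod_homog \<delta> d m \<and> (\<forall>i. h i - lp_iota_mod \<delta> m i \<in> lp_Kideal I)" for h m
  define \<Psi> where "\<Psi> h = (SOME m. P h m)" for h
  have P\<Psi>: "P h (\<Psi> h)" if "h \<in> B" for h
  proof -
    have "h \<in> iota_Md_pre I \<delta> M d" using B that part1[OF gi gm] by blast
    then have "\<exists>m. P h m" unfolding iota_Md_pre_def P_def by blast
    then show ?thesis unfolding \<Psi>_def by (rule someI_ex)
  qed
  have fin: "finite B" using ind unfolding indep_mod_def by blast
  have indB: "\<forall>b\<in>B. c b = 0" if "\<forall>i. (\<Sum>b\<in>B. lp_scale (c b) b) i \<in> lp_Kideal I" for c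
    using ind that unfolding indep_mod_def by blast
  have inj: "inj_on \<Psi> B"
  proof (rule inj_onI, rule ccontr)
    fix h1 h2 assume h: "h1 \<in> B" "h2 \<in> B" "\<Psi> h1 = \<Psi> h2" "h1 \<noteq> h2"
    define c where "c b = (if b = h1 then 1 else 0) + (if b = h2 then -1 else (0::'k))" for b
    have "(\<Sum>b\<in>B. lp_scale (c b) b) = (\<Sum>b\<in>B. (if b = h1 then b else 0)) + (\<Sum>b\<in>B. (if b = h2 then - b else 0))"
      unfolding sum.distrib[symmetric]
    proof (rule sum.cong[OF refl], rule ext)
      fix b i
      show "lp_scale (c b) b i = ((if b = h1 then b else 0) + (if b = h2 then - b else 0)) i"
        unfolding lp_scale_def c_def map_mult_plus using h(4)
        by (cases "b = h1"; cases "b = h2") (auto intro!: poly_mapping_eqI simp: lookup_map_mult)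
    qed
    also have "\<dots> = h1 - h2" using h fin by (simp add: sum.delta)
    finally have e: "(\<Sum>b\<in>B. lp_scale (c b) b) = h1 - h2" .
    have "\<forall>i. (h1 - h2) i \<in> lp_Kideal I"
    proof
      fix i
      have "(h1 - h2) i = (h1 i - lp_iota_mod \<delta> (\<Psi> h1) i) - (h2 i - lp_iota_mod \<delta> (\<Psi> h2) i)"
        using h(3) by simp
      moreover have a: "h1 i - lp_iota_mod \<delta> (\<Psi> h1) i \<in> lp_Kideal I" using P\<Psi>[OF h(1)] unfolding P_def by blast
      moreover have b: "h2 i - lp_iota_mod \<delta> (\<Psi> h2) i \<in> lp_Kideal I" using P\<Psi>[OF h(2)] unfolding P_def by blast
      ultimately show "(h1 - h2) i \<in> lp_Kideal I" using K_diff[OF a b] by simp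
    qed
    then have "\<forall>i. (\<Sum>b\<in>B. lp_scale (c b) b) i \<in> lp_Kideal I" unfolding e .
    then have "\<forall>b\<in>B. c b = 0" by (rule indB)
    then have "c h1 = 0" using h(1) by blast
    then show False using h(4) by (simp add: c_def)
  qed
  let ?B' = "\<Psi> ` B"
  have sub: "?B' \<subseteq> {m \<in> M. mod_homog \<delta> d m}" using P\<Psi> unfolding P_def by blast
  have "indep_mod nc_scale {m. \<forall>i. m i \<in> I} ?B'"
    unfolding indep_mod_def
  proof (intro conjI allI impI)
    show "finite ?B'" using fin by simp
    fix c assume "(\<Sum>b\<in>?B'. nc_scale (c b) b) \<in> {m. \<forall>i. m i \<in> I}"
    then have "\<forall>i. (\<Sum>h\<in>B. nc_scale (c (\<Psi> h)) (\<Psi> h)) i \<in> I"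
      by (simp add: sum.reindex[OF inj])
    then have "\<forall>i. lp_iota_mod \<delta> (\<Sum>h\<in>B. nc_scale (c (\<Psi> h)) (\<Psi> h)) i \<in> lp_Kideal I"
      unfolding iota_mod_io[OF gi gm] using K_io by blast
    then have A: "\<forall>i. (\<Sum>h\<in>B. lp_scale (c (\<Psi> h)) (lp_iota_mod \<delta> (\<Psi> h))) i \<in> lp_Kideal I"
      unfolding iotaM_sum .
    have Bm: "\<forall>i. (\<Sum>h\<in>B. lp_scale (c (\<Psi> h)) (h - lp_iota_mod \<delta> (\<Psi> h))) i \<in> lp_Kideal I"
    proof (rule W2_sum)
      fix h assume "h \<in> B"
      then have "\<forall>i. (h - lp_iota_mod \<delta> (\<Psi> h)) i \<in> lp_Kideal I" using P\<Psi> unfolding P_def by simp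
      then show "\<forall>i. lp_scale (c (\<Psi> h)) (h - lp_iota_mod \<delta> (\<Psi> h)) i \<in> lp_Kideal I" by (rule W2_scale)
    qed
    have split: "(\<Sum>h\<in>B. lp_scale (c (\<Psi> h)) h) = (\<Sum>h\<in>B. lp_scale (c (\<Psi> h)) (lp_iota_mod \<delta> (\<Psi> h)))
        + (\<Sum>h\<in>B. lp_scale (c (\<Psi> h)) (h - lp_iota_mod \<delta> (\<Psi> h)))"
      unfolding sum.distrib[symmetric]
      by (rule sum.cong[OF refl]) (auto simp: lp_scale_def fun_eq_iff map_mult_add[symmetric])
    have "\<forall>i. (\<Sum>h\<in>B. lp_scale (c (\<Psi> h)) h) i \<in> lp_Kideal I"
      unfolding split plus_fun_apply using A Bm K_add by blast
    then have "\<forall>h\<in>B. c (\<Psi> h) = 0" using indB[of "\<lambda>h. c (\<Psi> h)"] by blast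
    then show "\<forall>b\<in>?B'. c b = 0" by blast
  qed
  moreover have "card ?B' = card B" by (rule card_image[OF inj])
  ultimately show ?thesis using sub by blast
qed

lemma part2: "dim_mod nc_scale {m \<in> M. mod_homog \<delta> d m} {m. \<forall>i. m i \<in> I} =
         dim_mod lp_scale (Lcut_pre I \<delta> M d) {h. \<forall>i. h i \<in> lp_Kideal I}"
proof -
  have "{card B | B. B \<subseteq> {m \<in> M. mod_homog \<delta> d m} \<and> indep_mod nc_scale {m. \<forall>i. m i \<in> I} B}
      = {card B | B. B \<subseteq> Lcut_pre I \<delta> M d \<and> indep_mod lp_scale {h. \<forall>i. h i \<in> lp_Kideal I} B}"
  proof (intro equalityI subsetI)
    fix x assume "x \<in> {card B | B. B \<subseteq> {m \<in> M. mod_homog \<delta> d m} \<and> indep_mod nc_scale {m. \<forall>i. m i \<in> I} B}"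
    then obtain B where B: "x = card B" "B \<subseteq> {m \<in> M. mod_homog \<delta> d m}" "indep_mod nc_scale {m. \<forall>i. m i \<in> I} B" by blast
    from cards_le1[OF B(2,3)] obtain B' where B': "card B' = card B" "B' \<subseteq> Lcut_pre I \<delta> M d" "indep_mod lp_scale {h. \<forall>i. h i \<in> lp_Kideal I} B'"
      by blast
    show "x \<in> {card B | B. B \<subseteq> Lcut_pre I \<delta> M d \<and> indep_mod lp_scale {h. \<forall>i. h i \<in> lp_Kideal I} B}"
      by (rule CollectI, rule exI[of _ B']) (simp add: B(1) B')
  next
    fix x assume "x \<in> {card B | B. B \<subseteq> Lcut_pre I \<delta> M d \<and> indep_mod lp_scale {h. \<forall>i. h i \<in> lp_Kideal I} B}"
    then obtain B where B: "x = card B" "B \<subseteq> Lcut_pre I \<delta> M d" "indep_mod lp_scale {h. \<forall>i. h i \<in> lp_Kideal I} B" by blast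
    from cards_le2[OF B(2,3)] obtain B' where B': "card B' = card B" "B' \<subseteq> {m \<in> M. mod_homog \<delta> d m}" "indep_mod nc_scale {m. \<forall>i. m i \<in> I} B'"
      by blast
    show "x \<in> {card B | B. B \<subseteq> {m \<in> M. mod_homog \<delta> d m} \<and> indep_mod nc_scale {m. \<forall>i. m i \<in> I} B}"
      by (rule CollectI, rule exI[of _ B']) (simp add: B(1) B')
  qed
  then show ?thesis unfolding dim_mod_def by simp
qed

end


theorem mainTheorem8:
  fixes I :: "('a::finite, 'k::field) ncpoly set"
    and \<delta> :: "'b::finite \<Rightarrow> nat"
    and M :: "('b \<Rightarrow> ('a,'k) ncpoly) set"
    and d :: nat
  assumes "graded_two_sided_ideal I"
    and "graded_right_submodule_pre I \<delta> M"
  shows "iota_Md_pre I \<delta> M d = Lcut_pre I \<delta> M d \<and>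
         dim_mod nc_scale {m \<in> M. mod_homog \<delta> d m} {m. \<forall>i. m i \<in> I} =
         dim_mod lp_scale (Lcut_pre I \<delta> M d) {h. \<forall>i. h i \<in> lp_Kideal I}"
  using part1[OF assms] part2[OF assms] by blast

end
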